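(* Assume the standing hypotheses and let $p\in U_\delta(p_0)$, $\mu>0$. The following are equivalent: (i) the threshold $M(p)$ is a resonance of $H_\mu(p)$ (and then the resonance states are $f(q)=\frac{C\mu(p)\varphi(q)}{M(p)-w_p(q)}$, $C\neq0$ constant); (ii) $\varphi(\mathbf{q}_0(p))\neq0$ and $\Delta(\mu,p;M(p))=0$; (iii) $\varphi(\mathbf{q}_0(p))\neq0$ and $\mu=\mu(p)$.
   Context: Let $\mathbb{T}^3=(\mathbb{R}/2\pi\mathbb{Z})^3$, identified with $(-\pi,\pi]^3$, with Lebesgue measure $ds$. Standing hypotheses: $\varphi:\mathbb{T}^3\to\mathbb{R}$ is real-analytic and not identically zero; $w:\mathbb{T}^3\times\mathbb{T}^3\to\mathbb{R}$ is real-analytic with a unique global maximum at $(p_0,q_0)$, which is non-degenerate (negative definite Hessian). Write $w_p(q)=w(p,q)$, $M(p)=\max_q w_p(q)$. For $\mu>0$, $p\in\mathbb{T}^3$, $H_\mu(p)$ is the operator on $L^2(\mathbb{T}^3)$ given by $(H_\mu(p)f)(q)=w_p(q)f(q)+\mu\,\varphi(q)\int_{\mathbb{T}^3}\varphi(t)f(t)\,dt$. Fix $\delta>0$ small enough that on the $\delta$-neighborhood $U_\delta(p_0)\subset\mathbb{T}^3$ of $p_0$ there is a real-analytic map $\mathbf{q}_0:U_\delta(p_0)\to\mathbb{T}^3$ such that, for every $p\in U_\delta(p_0)$, $\mathbf{q}_0(p)$ is the unique maximum point of $w_p$ and this maximum is non-degenerate (such $\delta$ exists). For $p\in U_\delta(p_0)$,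 $\frac{1}{\mu(p)}=\int_{\mathbb{T}^3}\frac{\varphi^2(s)\,ds}{M(p)-w_p(s)}$ (finite and positive), and $\Delta(\mu,p;M(p)):=1-\mu\int_{\mathbb{T}^3}\frac{\varphi^2(s)\,ds}{M(p)-w_p(s)}=1-\mu/\mu(p)$. The threshold $M(p)$ is called a resonance of $H_\mu(p)$ if the equation $(w_p(q)-M(p))f(q)+\mu\varphi(q)\int_{\mathbb{T}^3}\varphi(t)f(t)\,dt=0$ (for a.e. $q$) has a nontrivial solution $f\in L^1(\mathbb{T}^3)\setminus L^2(\mathbb{T}^3)$ (a resonance state). *)

theory Defs
  imports "HOL-Analysis.Analysis"
begin

text \<open>The torus T^3 = (R/2 pi Z)^3 is modelled by 2 pi-periodic functions on R^3,
  with the fundamental domain (-pi,pi]^3 carrying Lebesgue measure.\<close>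

definition Tbox :: "(real^3) set" where
  "Tbox = {x. \<forall>i. - pi < x $ i \<and> x $ i \<le> pi}"

definition T3 :: "(real^3) measure" where
  "T3 = lebesgue_on Tbox"

definition in_lattice :: "real^3 \<Rightarrow> bool" where
  "in_lattice v \<longleftrightarrow> (\<forall>i. \<exists>k::int. v $ i = 2 * pi * of_int k)"

definition periodic3 :: "(real^3 \<Rightarrow> 'b) \<Rightarrow> bool" where
  "periodic3 f \<longleftrightarrow> (\<forall>x v. in_lattice v \<longrightarrow> f (x + v) = f x)"

definition real_analytic_on :: "'a::euclidean_space set \<Rightarrow> ('a \<Rightarrow> real) \<Rightarrow> bool" where
  "real_analytic_on S f \<longleftrightarrow>
     (\<forall>x\<in>S. \<exists>r>0. \<exists>c :: ('a \<Rightarrow> nat) \<Rightarrow> real. \<forall>y\<in>ball x r.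
        ((\<lambda>\<alpha>. c \<alpha> * (\<Prod>b\<in>Basis. ((y - x) \<bullet> b) ^ \<alpha> b)) has_sum f y)
          {\<alpha>. \<forall>b. b \<notin> Basis \<longrightarrow> \<alpha> b = 0})"

definition neg_def_hessian :: "('a::euclidean_space \<Rightarrow> real) \<Rightarrow> 'a \<Rightarrow> bool" where
  "neg_def_hessian f z \<longleftrightarrow>
     (\<exists>e>0. \<exists>D :: 'a \<Rightarrow> ('a \<Rightarrow>\<^sub>L real). \<exists>H.
        (\<forall>y\<in>ball z e. (f has_derivative blinfun_apply (D y)) (at y)) \<and>
        (D has_derivative H) (at z) \<and>
        (\<forall>v. v \<noteq> 0 \<longrightarrow> blinfun_apply (H v) v < 0))"

definition Mth :: "(real^3 \<Rightarrow> real^3 \<Rightarrow> real) \<Rightarrow> real^3 \<Rightarrow> real" where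
  "Mth w p = (SUP q\<in>Tbox. w p q)"

definition mu_p :: "(real^3 \<Rightarrow> real^3 \<Rightarrow> real) \<Rightarrow> (real^3 \<Rightarrow> real) \<Rightarrow> real^3 \<Rightarrow> real" where
  "mu_p w \<phi> p = 1 / (LINT s|T3. (\<phi> s)\<^sup>2 / (Mth w p - w p s))"

definition Delta :: "(real^3 \<Rightarrow> real^3 \<Rightarrow> real) \<Rightarrow> (real^3 \<Rightarrow> real) \<Rightarrow> real \<Rightarrow> real^3 \<Rightarrow> real" where
  "Delta w \<phi> \<mu> p = 1 - \<mu> * (LINT s|T3. (\<phi> s)\<^sup>2 / (Mth w p - w p s))"

definition resonance_state ::
  "(real^3 \<Rightarrow> real^3 \<Rightarrow> real) \<Rightarrow> (real^3 \<Rightarrow> real) \<Rightarrow> real \<Rightarrow> real^3 \<Rightarrow> (real^3 \<Rightarrow> real) \<Rightarrow> bool" where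
  "resonance_state w \<phi> \<mu> p f \<longleftrightarrow>
     integrable T3 f \<and> \<not> integrable T3 (\<lambda>q. (f q)\<^sup>2) \<and>
     (AE q in T3. (w p q - Mth w p) * f q + \<mu> * \<phi> q * (LINT t|T3. \<phi> t * f t) = 0)"

definition is_resonance ::
  "(real^3 \<Rightarrow> real^3 \<Rightarrow> real) \<Rightarrow> (real^3 \<Rightarrow> real) \<Rightarrow> real \<Rightarrow> real^3 \<Rightarrow> bool" where
  "is_resonance w \<phi> \<mu> p \<longleftrightarrow> (\<exists>f. resonance_state w \<phi> \<mu> p f)"

end

theory Submission
  imports Defs
begin

lemma prod_pow_sum:
  fixes t :: real
  shows "(\<Prod>b\<in>B. t ^ (\<alpha> b)) = t ^ (\<Sum>b\<in>B. \<alpha> b)"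
  by (simp add: power_sum)

lemma analytic_lip:
  fixes g :: "'a::euclidean_space \<Rightarrow> real"
  assumes "real_analytic_on UNIV g"
  shows "\<exists>K \<rho>. \<rho> > 0 \<and> (\<forall>y. dist y x < \<rho> \<longrightarrow> \<bar>g y - g x\<bar> \<le> K * dist y x)"
proof -
  define A where "A = {\<alpha>::'a\<Rightarrow>nat. \<forall>b. b \<notin> Basis \<longrightarrow> \<alpha> b = 0}"
  obtain r c where r: "r > 0" and H: "\<And>y. y \<in> ball x r \<Longrightarrow>
      ((\<lambda>\<alpha>. c \<alpha> * (\<Prod>b\<in>Basis. ((y - x) \<bullet> b) ^ \<alpha> b)) has_sum g y) A"
    using assms unfolding real_analytic_on_def A_def by blast
  define s where "s = r / (real DIM('a) + 1)"
  have s: "s > 0" using r by (simp add: s_def)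
  define y0 where "y0 = x + (\<Sum>b\<in>Basis. s *\<^sub>R b)"
  have "norm (\<Sum>b\<in>(Basis::'a set). s *\<^sub>R b) \<le> (\<Sum>b\<in>(Basis::'a set). norm (s *\<^sub>R b))"
    using norm_sum[of "\<lambda>b. s *\<^sub>R b" "Basis::'a set"] by simp
  also have "\<dots> = s * real DIM('a)" using s by simp
  also have "\<dots> < r" using r s unfolding s_def by (simp add: field_simps)
  finally have "y0 \<in> ball x r" by (simp add: y0_def dist_norm)
  from H[OF this] have h0: "((\<lambda>\<alpha>. c \<alpha> * (\<Prod>b\<in>Basis. s ^ \<alpha> b)) has_sum g y0) A"
    by (simp add: y0_def inner_sum_left_Basis)
  have sm: "(\<lambda>\<alpha>. c \<alpha> * (\<Prod>b\<in>Basis. s ^ \<alpha> b)) summable_on A"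
    by (rule has_sum_imp_summable[OF h0])
  have "(\<lambda>\<alpha>. norm (c \<alpha> * (\<Prod>b\<in>Basis. s ^ \<alpha> b))) summable_on A"
    using summable_on_iff_abs_summable_on_real[THEN iffD1, OF sm] .
  then obtain S where hS0: "((\<lambda>\<alpha>. norm (c \<alpha> * (\<Prod>b\<in>Basis. s ^ \<alpha> b))) has_sum S) A"
    unfolding summable_on_def by blast
  then have hS: "((\<lambda>\<alpha>. \<bar>c \<alpha> * (\<Prod>b\<in>Basis. s ^ \<alpha> b)\<bar>) has_sum S) A"
    by (simp only: real_norm_def)
  show ?thesis
  proof (intro exI conjI allI impI)
    show "s > 0" by (fact s)
    fix y assume "dist y x < s"
    define t where "t = dist y x"
    have t: "0 \<le> t" "t < s" using \<open>dist y x < s\<close> by (auto simp: t_def)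
    have "s \<le> r" unfolding s_def using r by (simp add: field_simps)
    then have "dist y x < r" using \<open>dist y x < s\<close> by linarith
    then have hy: "((\<lambda>\<alpha>. c \<alpha> * (\<Prod>b\<in>Basis. ((y - x) \<bullet> b) ^ \<alpha> b)) has_sum g y) A"
      using H by (simp add: dist_commute)
    have hx: "((\<lambda>\<alpha>. c \<alpha> * (\<Prod>b\<in>Basis. ((x - x) \<bullet> b) ^ \<alpha> b)) has_sum g x) A"
      using H[of x] r by simp
    define d where "d = (\<lambda>\<alpha>. c \<alpha> * (\<Prod>b\<in>Basis. ((y - x) \<bullet> b) ^ \<alpha> b)
                         - c \<alpha> * (\<Prod>b\<in>Basis. ((x - x) \<bullet> b) ^ \<alpha> b))"
    have hd: "(d has_sum (g y - g x)) A"
      using has_sum_add[OF hy has_sum_uminusI[OF hx]] unfolding d_def by simp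
    have he: "((\<lambda>\<alpha>. (t / s) * \<bar>c \<alpha> * (\<Prod>b\<in>Basis. s ^ \<alpha> b)\<bar>) has_sum ((t/s) * S)) A"
      by (rule has_sum_cmult_right[OF hS])
    have bound: "\<bar>d \<alpha>\<bar> \<le> (t / s) * \<bar>c \<alpha> * (\<Prod>b\<in>Basis. s ^ \<alpha> b)\<bar>" if "\<alpha> \<in> A" for \<alpha>
    proof (cases "\<forall>b\<in>Basis. \<alpha> b = 0")
      case True
      then show ?thesis using s t(1) by (simp add: d_def)
    next
      case False
      then obtain b0 where b0: "b0 \<in> Basis" "\<alpha> b0 \<noteq> 0" by auto
      have x0: "(\<Prod>b\<in>Basis. (0::real) ^ \<alpha> b) = 0"
        using b0 by (auto intro!: prod_zero bexI[of _ b0])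
      define n where "n = (\<Sum>b\<in>Basis. \<alpha> b)"
      have n1: "n \<ge> 1"
      proof -
        have "\<alpha> b0 \<le> n" unfolding n_def using b0(1) by (intro member_le_sum) auto
        moreover have "1 \<le> \<alpha> b0" using b0(2) by simp
        ultimately show ?thesis by linarith
      qed
      have "\<bar>\<Prod>b\<in>Basis. ((y - x) \<bullet> b) ^ \<alpha> b\<bar> = (\<Prod>b\<in>Basis. \<bar>(y - x) \<bullet> b\<bar> ^ \<alpha> b)"
        by (simp add: abs_prod power_abs)
      also have "\<dots> \<le> (\<Prod>b\<in>Basis. t ^ \<alpha> b)"
        by (intro prod_mono conjI power_mono) (auto simp: t_def dist_norm Basis_le_norm)
      also have "\<dots> = t ^ n" by (simp add: n_def power_sum)
      also have "\<dots> = (t/s)^n * s^n" using s by (simp add: power_divide)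
      also have "\<dots> \<le> (t/s) * s^n"
      proof -
        have "(t/s)^n \<le> (t/s)^1" using n1 t s by (intro power_decreasing) auto
        then show ?thesis using s by (intro mult_right_mono) auto
      qed
      also have "\<dots> = (t/s) * (\<Prod>b\<in>Basis. s ^ \<alpha> b)" by (simp add: n_def power_sum)
      finally have "\<bar>\<Prod>b\<in>Basis. ((y - x) \<bullet> b) ^ \<alpha> b\<bar> \<le> (t/s) * (\<Prod>b\<in>Basis. s ^ \<alpha> b)" .
      then have "\<bar>c \<alpha>\<bar> * \<bar>\<Prod>b\<in>Basis. ((y - x) \<bullet> b) ^ \<alpha> b\<bar> \<le> \<bar>c \<alpha>\<bar> * ((t/s) * (\<Prod>b\<in>Basis. s ^ \<alpha> b))"
        by (intro mult_left_mono) auto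
      moreover have "(\<Prod>b\<in>Basis. s ^ \<alpha> b) \<ge> 0" using s by (intro prod_nonneg) auto
      ultimately show ?thesis using s t
        by (simp add: d_def x0 abs_mult mult_ac)
    qed
    have "g y - g x \<le> (t/s) * S"
      by (rule has_sum_mono[OF hd he]) (use bound abs_le_D1 in blast)
    moreover have "-(g y - g x) \<le> (t/s) * S"
      by (rule has_sum_mono[OF has_sum_uminusI[OF hd] he]) (use bound abs_le_D2 in blast)
    ultimately have "\<bar>g y - g x\<bar> \<le> (t/s) * S" by linarith
    then show "\<bar>g y - g x\<bar> \<le> S / s * dist y x" by (simp add: t_def mult.commute)
  qed
qed

lemma analytic_cont:
  fixes g :: "'a::euclidean_space \<Rightarrow> real"
  assumes "real_analytic_on UNIV g"
  shows "continuous_on UNIV g"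
proof -
  have "isCont g x" for x
  proof -
    obtain K \<rho> where r: "\<rho> > 0" and L: "\<And>y. dist y x < \<rho> \<Longrightarrow> \<bar>g y - g x\<bar> \<le> K * dist y x"
      using analytic_lip[OF assms, of x] by blast
    show ?thesis unfolding isCont_def
    proof (rule tendstoI)
      fix e :: real assume e: "e > 0"
      define d where "d = min \<rho> (e / (\<bar>K\<bar> + 1))"
      have d: "d > 0" using r e by (simp add: d_def)
      have "\<forall>\<^sub>F y in at x. dist y x < d" using d eventually_at by blast
      then show "\<forall>\<^sub>F y in at x. dist (g y) (g x) < e"
      proof eventually_elim
        case (elim y)
        then have "\<bar>g y - g x\<bar> \<le> K * dist y x" using L d_def by auto
        also have "\<dots> \<le> \<bar>K\<bar> * dist y x" by (simp add: mult_right_mono)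
        also have "\<dots> \<le> \<bar>K\<bar> * d" using elim by (simp add: mult_left_mono)
        also have "\<dots> < e"
        proof -
          have "\<bar>K\<bar> * d \<le> \<bar>K\<bar> * (e / (\<bar>K\<bar> + 1))" by (intro mult_left_mono) (auto simp: d_def)
          also have "\<dots> < e" using e by (simp add: field_simps)
          finally show ?thesis .
        qed
        finally show ?case by (simp add: dist_real_def)
      qed
    qed
  qed
  then show ?thesis by (simp add: continuous_at_imp_continuous_on)
qed

lemma cont_Q:
  fixes H :: "'a::euclidean_space \<Rightarrow> ('a \<Rightarrow>\<^sub>L real)"
  assumes "bounded_linear H"
  shows "continuous_on S (\<lambda>v. blinfun_apply (H v) v)"
proof -
  have "continuous_on S H" using assms linear_continuous_on by blast
  then show ?thesis by (intro continuous_intros) auto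
qed

lemma Q_scale:
  fixes H :: "'a::euclidean_space \<Rightarrow> ('a \<Rightarrow>\<^sub>L real)"
  assumes "bounded_linear H"
  shows "blinfun_apply (H (a *\<^sub>R v)) (b *\<^sub>R v) = a * b * blinfun_apply (H v) v"
proof -
  have "H (a *\<^sub>R v) = a *\<^sub>R H v" using assms by (simp add: linear_simps)
  then show ?thesis by (simp add: blinfun.scaleR_right blinfun.scaleR_left)
qed

lemma hess_lower:
  fixes H :: "'a::euclidean_space \<Rightarrow> ('a \<Rightarrow>\<^sub>L real)"
  assumes H: "bounded_linear H" and neg: "\<And>v. v \<noteq> 0 \<Longrightarrow> blinfun_apply (H v) v < 0"
  shows "\<exists>l>0. \<forall>v. blinfun_apply (H v) v \<le> - l * (norm v)\<^sup>2"
proof -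
  obtain b :: 'a where b: "b \<in> Basis" using nonempty_Basis by blast
  have ne: "sphere (0::'a) 1 \<noteq> {}" using b by (intro ex_in_conv[THEN iffD1]) (auto intro!: exI[of _ b])
  obtain v0 where v0: "v0 \<in> sphere 0 1" and mn: "\<And>v. v \<in> sphere 0 1 \<Longrightarrow>
      blinfun_apply (H v) v \<le> blinfun_apply (H v0) v0"
    using continuous_attains_sup[OF compact_sphere ne cont_Q[OF H]] by blast
  define l where "l = - blinfun_apply (H v0) v0"
  have "v0 \<noteq> 0" using v0 by auto
  then have l: "l > 0" using neg l_def by fastforce
  show ?thesis
  proof (intro exI conjI allI)
    show "l > 0" by (fact l)
    fix v :: 'a
    show "blinfun_apply (H v) v \<le> - l * (norm v)\<^sup>2"
    proof (cases "v = 0")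
      case True then show ?thesis by (simp add: blinfun.zero_left linear_simps H)
    next
      case False
      define u where "u = (1 / norm v) *\<^sub>R v"
      have u: "u \<in> sphere 0 1" using False by (simp add: u_def)
      have vu: "v = norm v *\<^sub>R u" using False by (simp add: u_def)
      have "blinfun_apply (H v) v = norm v * norm v * blinfun_apply (H u) u"
        by (subst (1 2) vu) (simp add: Q_scale[OF H])
      also have "\<dots> \<le> norm v * norm v * (- l)"
        using mn[OF u] unfolding l_def by (intro mult_left_mono) auto
      finally have "blinfun_apply (H v) v \<le> norm v * norm v * (- l)" .
      then show ?thesis by (simp add: power2_eq_square algebra_simps)
    qed
  qed
qed

lemma hess_upper:
  fixes H :: "'a::euclidean_space \<Rightarrow> ('a \<Rightarrow>\<^sub>L real)"
  assumes H: "bounded_linear H"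
  shows "\<exists>B>0. \<forall>v. \<bar>blinfun_apply (H v) v\<bar> \<le> B * (norm v)\<^sup>2"
proof -
  obtain K where K: "K > 0" "\<And>v. norm (H v) \<le> norm v * K"
    using bounded_linear.pos_bounded[OF H] by blast
  show ?thesis
  proof (intro exI conjI allI)
    show "K > 0" by (fact K)
    fix v
    have "\<bar>blinfun_apply (H v) v\<bar> \<le> norm (H v) * norm v"
      using norm_blinfun[of "H v" v] by simp
    also have "\<dots> \<le> norm v * K * norm v" using K by (intro mult_right_mono) auto
    finally show "\<bar>blinfun_apply (H v) v\<bar> \<le> K * (norm v)\<^sup>2" by (simp add: power2_eq_square mult_ac)
  qed
qed

lemma hess_bounds:
  fixes f :: "'a::euclidean_space \<Rightarrow> real"
  assumes "neg_def_hessian f z" and max: "\<And>y. f y \<le> f z"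
  shows "\<exists>r c C. r > 0 \<and> c > 0 \<and> C > 0 \<and> (\<forall>h. norm h < r \<longrightarrow>
           c * (norm h)\<^sup>2 \<le> f z - f (z + h) \<and> f z - f (z + h) \<le> C * (norm h)\<^sup>2)"
proof -
  obtain e D H where e: "e > 0"
    and Df: "\<And>y. y \<in> ball z e \<Longrightarrow> (f has_derivative blinfun_apply (D y)) (at y)"
    and DH: "(D has_derivative H) (at z)"
    and neg: "\<And>v. v \<noteq> 0 \<Longrightarrow> blinfun_apply (H v) v < 0"
    using assms(1) unfolding neg_def_hessian_def by blast
  have Hl: "bounded_linear H" using DH has_derivative_bounded_linear by blast
  obtain l where l: "l > 0" and Ql: "\<And>v. blinfun_apply (H v) v \<le> - l * (norm v)\<^sup>2"
    using hess_lower[OF Hl neg] by blast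
  obtain B where B: "B > 0" and QB: "\<And>v. \<bar>blinfun_apply (H v) v\<bar> \<le> B * (norm v)\<^sup>2"
    using hess_upper[OF Hl] by blast
  have Dz: "blinfun_apply (D z) v = 0" for v
  proof -
    have "blinfun_apply (D z) = (\<lambda>v. 0)"
      by (rule differential_zero_maxmin[of z UNIV f]) (use Df e max in auto)
    then show ?thesis by simp
  qed
  obtain \<rho> where \<rho>: "\<rho> > 0" and Dapx: "\<And>y. norm (y - z) < \<rho> \<Longrightarrow>
      norm (D y - D z - H (y - z)) \<le> (l/2) * norm (y - z)"
    using DH[unfolded has_derivative_at_alt] l by (meson half_gt_zero)
  define r where "r = min e \<rho>"
  have r: "r > 0" using e \<rho> by (simp add: r_def)
  define C where "C = (B + l/2) / 2 + 1"
  have C: "C > 0" using B l unfolding C_def by (smt (verit) half_gt_zero)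
  show ?thesis
  proof (intro exI conjI allI impI)
    show "r > 0" "l/4 > 0" "C > 0" using r l C by auto
    fix h :: 'a assume h: "norm h < r"
    define g where "g = (\<lambda>t::real. f (z + t *\<^sub>R h))"
    have gd: "(g has_real_derivative blinfun_apply (D (z + t *\<^sub>R h)) h) (at t)"
      if t: "0 \<le> t" "t \<le> 1" for t
    proof -
      have "norm (t *\<^sub>R h) \<le> norm h" using t by (simp add: mult_left_le_one_le)
      then have "z + t *\<^sub>R h \<in> ball z e" using h by (simp add: dist_norm r_def)
      from Df[OF this] have "(f has_derivative blinfun_apply (D (z + t *\<^sub>R h))) (at ((\<lambda>s. z + s *\<^sub>R h) t))"
        by simp
      moreover have "((\<lambda>s. z + s *\<^sub>R h) has_derivative (\<lambda>s. s *\<^sub>R h)) (at t)"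
        by (auto intro!: derivative_eq_intros)
      ultimately have "((f \<circ> (\<lambda>s. z + s *\<^sub>R h)) has_derivative (blinfun_apply (D (z + t *\<^sub>R h)) \<circ> (\<lambda>s. s *\<^sub>R h))) (at t)"
        using diff_chain_at by blast
      moreover have "(blinfun_apply (D (z + t *\<^sub>R h)) \<circ> (\<lambda>s. s *\<^sub>R h)) = (*) (blinfun_apply (D (z + t *\<^sub>R h)) h)"
        by (auto simp: fun_eq_iff blinfun.scaleR_right)
      ultimately show ?thesis
        unfolding has_field_derivative_def g_def by (simp add: comp_def)
    qed
    have err: "\<bar>blinfun_apply (D (z + t *\<^sub>R h)) h - t * blinfun_apply (H h) h\<bar> \<le> (l/2) * t * (norm h)\<^sup>2"
      if t: "0 \<le> t" "t \<le> 1" for t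
    proof -
      have nt: "norm (t *\<^sub>R h) \<le> norm h" using t by (simp add: mult_left_le_one_le)
      have "norm ((z + t *\<^sub>R h) - z) < \<rho>" using nt h by (simp add: r_def)
      from Dapx[OF this] have a: "norm (D (z + t *\<^sub>R h) - D z - H (t *\<^sub>R h)) \<le> (l/2) * (t * norm h)"
        using t by simp
      have eq: "blinfun_apply (D (z + t *\<^sub>R h)) h - t * blinfun_apply (H h) h
          = blinfun_apply (D (z + t *\<^sub>R h) - D z - H (t *\<^sub>R h)) h"
        using Q_scale[OF Hl, of t h 1] by (simp add: blinfun.diff_left Dz)
      have "\<bar>blinfun_apply (D (z + t *\<^sub>R h) - D z - H (t *\<^sub>R h)) h\<bar>
          \<le> norm (D (z + t *\<^sub>R h) - D z - H (t *\<^sub>R h)) * norm h"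
        using norm_blinfun by (metis real_norm_def)
      also have "\<dots> \<le> (l/2) * (t * norm h) * norm h" using a by (intro mult_right_mono) auto
      finally show ?thesis unfolding eq by (simp add: power2_eq_square mult_ac)
    qed
    define k1 where "k1 = (\<lambda>t. g t + (l/4 * (norm h)\<^sup>2) * t\<^sup>2)"
    have "k1 1 \<le> k1 0"
    proof (rule DERIV_nonpos_imp_nonincreasing[of 0 1 k1])
      fix t :: real assume t: "0 \<le> t" "t \<le> 1"
      have sq: "((\<lambda>t. (l/4 * (norm h)\<^sup>2) * t\<^sup>2) has_real_derivative (l/4 * (norm h)\<^sup>2) * (2 * t)) (at t)"
        by (auto intro!: derivative_eq_intros)
      have "(k1 has_real_derivative (blinfun_apply (D (z + t *\<^sub>R h)) h + (l/4 * (norm h)\<^sup>2) * (2 * t))) (at t)"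
        unfolding k1_def by (rule DERIV_add[OF gd[OF t] sq])
      then have "(k1 has_real_derivative (blinfun_apply (D (z + t *\<^sub>R h)) h + (l/2) * t * (norm h)\<^sup>2)) (at t)"
        by (simp add: algebra_simps)
      moreover have "blinfun_apply (D (z + t *\<^sub>R h)) h + (l/2) * t * (norm h)\<^sup>2 \<le> 0"
      proof -
        have "t * blinfun_apply (H h) h \<le> t * (- l * (norm h)\<^sup>2)"
          using Ql[of h] t by (intro mult_left_mono) auto
        then show ?thesis using err[OF t] unfolding abs_le_iff by (simp add: algebra_simps)
      qed
      ultimately show "\<exists>y. (k1 has_real_derivative y) (at t) \<and> y \<le> 0" by blast
    qed simp
    then show "l / 4 * (norm h)\<^sup>2 \<le> f z - f (z + h)" by (simp add: k1_def g_def)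
    define k2 where "k2 = (\<lambda>t. g t + (C * (norm h)\<^sup>2) * t\<^sup>2)"
    have "k2 0 \<le> k2 1"
    proof (rule DERIV_nonneg_imp_nondecreasing[of 0 1 k2])
      fix t :: real assume t: "0 \<le> t" "t \<le> 1"
      have sq: "((\<lambda>t. (C * (norm h)\<^sup>2) * t\<^sup>2) has_real_derivative (C * (norm h)\<^sup>2) * (2 * t)) (at t)"
        by (auto intro!: derivative_eq_intros)
      have "(k2 has_real_derivative (blinfun_apply (D (z + t *\<^sub>R h)) h + (C * (norm h)\<^sup>2) * (2 * t))) (at t)"
        unfolding k2_def by (rule DERIV_add[OF gd[OF t] sq])
      then have "(k2 has_real_derivative (blinfun_apply (D (z + t *\<^sub>R h)) h + 2 * C * t * (norm h)\<^sup>2)) (at t)"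
        by (simp add: algebra_simps)
      moreover have "blinfun_apply (D (z + t *\<^sub>R h)) h + 2 * C * t * (norm h)\<^sup>2 \<ge> 0"
      proof -
        have "t * blinfun_apply (H h) h \<ge> t * (- B * (norm h)\<^sup>2)"
          using QB[of h] t by (intro mult_left_mono) (auto simp: abs_le_iff)
        moreover have "2 * C * t * (norm h)\<^sup>2 \<ge> (B + l/2) * t * (norm h)\<^sup>2"
          using t B l by (intro mult_right_mono) (auto simp: C_def field_simps)
        ultimately show ?thesis using err[OF t] unfolding abs_le_iff by (simp add: algebra_simps)
      qed
      ultimately show "\<exists>y. (k2 has_real_derivative y) (at t) \<and> y \<ge> 0" by blast
    qed simp
    then show "f z - f (z + h) \<le> C * (norm h)\<^sup>2" by (simp add: k2_def g_def)
  qed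
qed

lemma lat_add: "in_lattice a \<Longrightarrow> in_lattice b \<Longrightarrow> in_lattice (a + b)"
  unfolding in_lattice_def
proof (intro allI)
  fix i assume a: "\<forall>i. \<exists>k::int. a $ i = 2 * pi * of_int k" and b: "\<forall>i. \<exists>k::int. b $ i = 2 * pi * of_int k"
  obtain ka kb :: int where "a $ i = 2 * pi * of_int ka" "b $ i = 2 * pi * of_int kb" using a b by blast
  then show "\<exists>k::int. (a + b) $ i = 2 * pi * of_int k"
    by (intro exI[of _ "ka + kb"]) (simp add: algebra_simps)
qed

lemma lat_neg: "in_lattice a \<Longrightarrow> in_lattice (- a)"
  unfolding in_lattice_def
proof (intro allI)
  fix i assume a: "\<forall>i. \<exists>k::int. a $ i = 2 * pi * of_int k"
  obtain ka :: int where "a $ i = 2 * pi * of_int ka" using a by blast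
  then show "\<exists>k::int. (- a) $ i = 2 * pi * of_int k"
    by (intro exI[of _ "- ka"]) simp
qed

lemma lat_diff: "in_lattice a \<Longrightarrow> in_lattice b \<Longrightarrow> in_lattice (a - b)"
  using lat_add[of a "- b"] lat_neg[of b] by simp

lemma lat_zero: "in_lattice 0"
  unfolding in_lattice_def by (auto intro: exI[of _ 0])

lemma per_shift: "periodic3 f \<Longrightarrow> in_lattice v \<Longrightarrow> f (x + v) = f x"
  unfolding periodic3_def by blast

lemma per_eq: "periodic3 f \<Longrightarrow> in_lattice (x - y) \<Longrightarrow> f x = f y"
  using per_shift[of f "x - y" y] by simp

lemma rep_exists:
  fixes z :: "real^3"
  shows "\<exists>q. q \<in> Tbox \<and> in_lattice (q - z)"
proof -
  define t where "t = (\<lambda>i. (z$i + pi) / (2 * pi))"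
  define k where "k = (\<lambda>i. 1 - \<lceil>t i\<rceil>)"
  define q where "q = z + (\<chi> i. 2 * pi * of_int (k i))"
  have "in_lattice (q - z)" unfolding in_lattice_def q_def by auto
  moreover have "q \<in> Tbox" unfolding Tbox_def
  proof (intro CollectI allI conjI)
    fix i
    have zi: "z$i = 2 * pi * t i - pi" by (simp add: t_def)
    have qi: "q$i = 2 * pi * (t i + 1 - of_int \<lceil>t i\<rceil>) - pi"
      by (simp add: q_def k_def zi algebra_simps)
    have c1: "0 < t i + 1 - of_int \<lceil>t i\<rceil>" using ceiling_correct[of "t i"] by linarith
    have c2: "t i + 1 - of_int \<lceil>t i\<rceil> \<le> 1" using ceiling_correct[of "t i"] by linarith
    have "0 < 2 * pi * (t i + 1 - of_int \<lceil>t i\<rceil>)" using c1 by simp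
    then show "- pi < q$i" unfolding qi by linarith
    have "2 * pi * (t i + 1 - of_int \<lceil>t i\<rceil>) \<le> 2 * pi * 1"
      using c2 by (intro mult_left_mono) auto
    then show "q$i \<le> pi" unfolding qi by linarith
  qed
  ultimately show ?thesis by blast
qed

lemma lat_int_bound:
  fixes k :: int
  assumes "\<bar>2 * pi * of_int k\<bar> < 2 * pi * B"
  shows "\<bar>k\<bar> < B"
proof -
  have "2 * pi * \<bar>of_int k\<bar> < 2 * pi * B" using assms by (simp add: abs_mult)
  then have "\<bar>real_of_int k\<bar> < B" by (simp add: mult_less_cancel_left_pos)
  then show ?thesis by simp
qed

lemma rep_unique:
  assumes "a \<in> Tbox" "b \<in> Tbox" "in_lattice (a - b)"
  shows "a = b"
proof -
  have "a$i = b$i" for i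
  proof -
    obtain k :: int where k: "(a - b)$i = 2 * pi * of_int k" using assms(3) unfolding in_lattice_def by blast
    have "- pi < a$i" "a$i \<le> pi" "- pi < b$i" "b$i \<le> pi" using assms(1,2) unfolding Tbox_def by auto
    then have "\<bar>2 * pi * of_int k\<bar> < 2 * pi * 1" using k by simp
    then have "\<bar>k\<bar> < 1" using lat_int_bound[of k 1] by simp
    then have "k = 0" by simp
    then show ?thesis using k by simp
  qed
  then show ?thesis by (simp add: vec_eq_iff)
qed

definition Vset :: "(real^3) set" where
  "Vset = {v. \<forall>i. v$i \<in> {- 2 * pi, 0, 2 * pi}}"

lemma finite_Vset: "finite Vset"
proof -
  have "Vset = vec_nth -` (PiE UNIV (\<lambda>_. {- 2 * pi, 0, 2 * pi}))"
    unfolding Vset_def by (auto simp: PiE_def extensional_def)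
  moreover have "finite (PiE (UNIV::3 set) (\<lambda>_. {- 2 * pi, 0, 2 * (pi::real)}))"
    by (intro finite_PiE) auto
  moreover have "inj vec_nth" by (simp add: inj_def vec_eq_iff)
  ultimately show ?thesis by (metis finite_vimageI)
qed

lemma lat_in_Vset:
  assumes "in_lattice v" "\<And>i. \<bar>v$i\<bar> < 4 * pi"
  shows "v \<in> Vset"
proof -
  have "v$i \<in> {- 2 * pi, 0, 2 * pi}" for i
  proof -
    obtain k :: int where k: "v$i = 2 * pi * of_int k" using assms(1) unfolding in_lattice_def by blast
    have "\<bar>2 * pi * of_int k\<bar> < 2 * pi * 2" using assms(2)[of i] k by simp
    then have "\<bar>k\<bar> < 2" using lat_int_bound[of k 2] by simp
    then have "k = -1 \<or> k = 0 \<or> k = 1" by auto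
    then show ?thesis using k by auto
  qed
  then show ?thesis unfolding Vset_def by blast
qed

lemma Vset_lat:
  assumes "v \<in> Vset" shows "in_lattice v"
proof -
  have "\<exists>k::int. v $ i = 2 * pi * of_int k" for i
  proof -
    have "v$i \<in> {- 2 * pi, 0, 2 * pi}" using assms unfolding Vset_def by blast
    then show ?thesis by (elim insertE) (auto intro: exI[of _ "-1"] exI[of _ 0] exI[of _ 1])
  qed
  then show ?thesis unfolding in_lattice_def by blast
qed

lemma Tbox_sets: "Tbox \<in> sets borel"
proof -
  have eq: "Tbox = (\<Inter>i\<in>UNIV. {x::real^3. - pi < x$i} \<inter> {x. x$i \<le> pi})"
    unfolding Tbox_def by auto
  have op: "{x::real^3. - pi < x$i} \<in> sets borel" for i
    by (intro borel_open open_Collect_less continuous_intros)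
  have cl: "{x::real^3. x$i \<le> pi} \<in> sets borel" for i
    by (intro borel_closed closed_Collect_le continuous_intros)
  show ?thesis unfolding eq
    by (rule sets.countable_INT'') (auto intro!: sets.Int op cl)
qed

lemma Tbox_bounded: "q \<in> Tbox \<Longrightarrow> \<bar>q$i\<bar> \<le> pi"
  unfolding Tbox_def by (auto simp: abs_le_iff) (smt (verit))

lemma Tbox_norm: "q \<in> Tbox \<Longrightarrow> norm q \<le> 3 * pi"
proof -
  assume q: "q \<in> Tbox"
  have "norm q \<le> (\<Sum>i\<in>UNIV. \<bar>q$i\<bar>)" by (rule norm_le_l1_cart)
  also have "\<dots> \<le> (\<Sum>i\<in>(UNIV::3 set). pi)" by (intro sum_mono Tbox_bounded[OF q])
  also have "\<dots> = 3 * pi" by simp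
  finally show ?thesis .
qed

lemma inner_const_vec:
  fixes b :: "real^3"
  assumes "b \<in> Basis"
  shows "(\<chi> i. e) \<bullet> b = e"
  using assms by (auto simp: Basis_vec_def inner_axis)

lemma card_Basis3: "card (Basis :: (real^3) set) = 3"
  using DIM_cart[where 'a=real and 'b=3] by simp

lemma cube_vol:
  fixes q :: "real^3"
  assumes "c \<le> d"
  shows "emeasure lborel (cbox (q + (\<chi> i. c)) (q + (\<chi> i. d))) = ennreal ((d - c)^3)"
    and "emeasure lborel (box (q + (\<chi> i. c)) (q + (\<chi> i. d))) = ennreal ((d - c)^3)"
proof -
  have eq: "(q + (\<chi> i. d)) - (q + (\<chi> i. c)) = (\<chi> i. d - c)"
    by (simp add: vec_eq_iff)
  have le: "\<And>b. b \<in> Basis \<Longrightarrow> (q + (\<chi> i. c)) \<bullet> b \<le> (q + (\<chi> i. d)) \<bullet> b"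
    using assms by (simp add: inner_add_left inner_const_vec)
  have pr: "(\<Prod>b\<in>(Basis::(real^3) set). (\<chi> i. d - c) \<bullet> b) = (d - c)^3"
    by (simp add: inner_const_vec card_Basis3)
  show "emeasure lborel (cbox (q + (\<chi> i. c)) (q + (\<chi> i. d))) = ennreal ((d - c)^3)"
    using emeasure_lborel_cbox[OF le] unfolding eq pr
    by (metis (no_types, lifting) assms diff_ge_0_iff_ge ennreal_power prod_ennreal zero_le_power)
  show "emeasure lborel (box (q + (\<chi> i. c)) (q + (\<chi> i. d))) = ennreal ((d - c)^3)"
    using emeasure_lborel_box[OF le] unfolding eq pr
    by (metis (no_types, lifting) assms diff_ge_0_iff_ge ennreal_power prod_ennreal zero_le_power)
qed

lemma cball_sub_cube:
  fixes z :: "real^3"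
  shows "cball z r \<subseteq> cbox (z + (\<chi> i. - r)) (z + (\<chi> i. r))"
proof
  fix q assume "q \<in> cball z r"
  then have "norm (q - z) \<le> r" by (simp add: dist_norm norm_minus_commute)
  moreover have "\<bar>(q - z) $ i\<bar> \<le> norm (q - z)" for i by (rule component_le_norm_cart)
  ultimately have "\<bar>q $ i - z $ i\<bar> \<le> r" for i by (metis order_trans vector_minus_component)
  then show "q \<in> cbox (z + (\<chi> i. - r)) (z + (\<chi> i. r))"
    unfolding mem_box_cart by (simp add: abs_le_iff) (smt (verit))
qed

lemma exists_shell:
  fixes t R :: real
  assumes "0 < t" "t \<le> R"
  shows "\<exists>k. R / 2^(Suc k) < t \<and> t \<le> R / 2^k"
proof -
  have R: "R > 0" using assms by linarith
  obtain n where n: "(1/2::real)^n < t / R"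
    using real_arch_pow_inv[of "t/R" "1/2"] assms R by auto
  then have ex: "\<exists>n. R / 2^(Suc n) < t"
    using R by (intro exI[of _ n]) (simp add: field_simps power_one_over)
  define k where "k = (LEAST n. R / 2^(Suc n) < t)"
  have k1: "R / 2^(Suc k) < t" unfolding k_def by (rule LeastI_ex[OF ex])
  have k2: "t \<le> R / 2^k"
  proof (cases k)
    case 0 then show ?thesis using assms by simp
  next
    case (Suc j)
    then have "\<not> (R / 2^(Suc j) < t)" using not_less_Least[of j "\<lambda>n. R / 2^(Suc n) < t"]
      unfolding k_def by (metis Suc k_def lessI)
    then show ?thesis using Suc by simp
  qed
  show ?thesis using k1 k2 by blast
qed

lemma inv_sq_finite:
  fixes z :: "real^3"
  assumes R: "R > 0"
  shows "(\<integral>\<^sup>+ q \<in> cball z R. ennreal (1 / (norm (q - z))\<^sup>2) \<partial>lborel) < \<infinity>"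
proof -
  define h where "h = (\<lambda>q::real^3. ennreal (1 / (norm (q - z))\<^sup>2))"
  define S where "S = (\<lambda>k::nat. cball z (R / 2^k) - cball z (R / 2^(Suc k)))"
  have Smeas: "S k \<in> sets lborel" for k unfolding S_def by auto
  have hmeas: "h \<in> borel_measurable lborel" unfolding h_def by measurable
  have disj: "disjoint_family S"
  proof (unfold disjoint_family_on_def, intro ballI impI)
    fix m n :: nat assume "m \<noteq> n"
    have *: "S a \<inter> S b = {}" if "a < b" for a b
    proof -
      have p: "(2::real)^(Suc a) \<le> 2^b" by (rule power_increasing) (use that in auto)
      have "R / 2^b \<le> R / 2^(Suc a)"
        using R p by (intro divide_left_mono) auto
      then have "cball z (R / 2^b) \<subseteq> cball z (R / 2^(Suc a))" by (rule subset_cball)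
      then show ?thesis unfolding S_def by auto
    qed
    show "S m \<inter> S n = {}"
      using *[of m n] *[of n m] \<open>m \<noteq> n\<close> by (cases "m < n") (auto simp: Int_commute)
  qed
  have eq: "(\<integral>\<^sup>+ q \<in> cball z R. h q \<partial>lborel) = (\<integral>\<^sup>+ q \<in> (\<Union>k. S k). h q \<partial>lborel)"
  proof (intro nn_integral_cong)
    fix q :: "real^3"
    show "h q * indicator (cball z R) q = h q * indicator (\<Union>k. S k) q"
    proof (cases "q = z")
      case True then show ?thesis by (simp add: h_def)
    next
      case False
      have "q \<in> cball z R \<longleftrightarrow> q \<in> (\<Union>k. S k)"
      proof
        assume q: "q \<in> cball z R"
        have "0 < dist z q" "dist z q \<le> R" using False q by auto
        from exists_shell[OF this] obtain k where
          "R / 2^(Suc k) < dist z q" "dist z q \<le> R / 2^k" by blast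
        then show "q \<in> (\<Union>k. S k)" unfolding S_def by auto
      next
        assume "q \<in> (\<Union>k. S k)"
        then obtain k where "q \<in> S k" by blast
        moreover have "R / 2^k \<le> R" using R by (simp add: field_simps)
        ultimately show "q \<in> cball z R" unfolding S_def by auto
      qed
      then show ?thesis by (simp add: indicator_def)
    qed
  qed
  also have "\<dots> = (\<Sum>k. (\<integral>\<^sup>+ q \<in> S k. h q \<partial>lborel))"
    by (rule nn_integral_disjoint_family[OF hmeas Smeas disj])
  also have "\<dots> \<le> (\<Sum>k. ennreal (32 * R * (1/2)^k))"
  proof (intro suminf_le allI)
    fix k :: nat
    define a :: real where "a = 2^k"
    have a: "a > 0" by (simp add: a_def)
    have "(\<integral>\<^sup>+ q \<in> S k. h q \<partial>lborel) \<le> (\<integral>\<^sup>+ q. ennreal ((2 * a / R)^2) * indicator (S k) q \<partial>lborel)"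
    proof (intro nn_integral_mono)
      fix q
      show "h q * indicator (S k) q \<le> ennreal ((2 * a / R)^2) * indicator (S k) q"
      proof (cases "q \<in> S k")
        case True
        then have d: "R / (2 * a) < norm (q - z)"
          unfolding S_def a_def by (auto simp: dist_norm norm_minus_commute)
        have "R / (2 * a) > 0" using R a by simp
        then have "1 / (norm (q - z))\<^sup>2 \<le> 1 / (R / (2 * a))\<^sup>2"
          using d by (intro divide_left_mono power_mono mult_pos_pos) auto
        also have "\<dots> = (2 * a / R)^2" by (simp add: power_divide)
        finally show ?thesis using True by (simp add: h_def ennreal_leI)
      qed (simp)
    qed
    also have "\<dots> = ennreal ((2 * a / R)^2) * emeasure lborel (S k)"
      by (rule nn_integral_cmult_indicator[OF Smeas])
    also have "\<dots> \<le> ennreal ((2 * a / R)^2) * emeasure lborel (cbox (z + (\<chi> i. - (R / a))) (z + (\<chi> i. R / a)))"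
    proof (intro mult_left_mono emeasure_mono)
      show "S k \<subseteq> cbox (z + (\<chi> i. - (R / a))) (z + (\<chi> i. R / a))"
        using cball_sub_cube[of z "R / a"] unfolding S_def a_def by auto
    qed auto
    also have "\<dots> = ennreal ((2 * a / R)^2) * ennreal ((2 * (R / a))^3)"
      using cube_vol(1)[of "- (R / a)" "R / a" z] R a by simp
    also have "\<dots> = ennreal (32 * R * (1/2)^k)"
    proof -
      have "(2 * a / R)^2 * (2 * (R / a))^3 = 32 * R / a"
        using R a by (simp add: field_simps power2_eq_square power3_eq_cube)
      also have "\<dots> = 32 * R * (1/2)^k" by (simp add: a_def power_one_over)
      finally show ?thesis by (simp add: ennreal_mult'[symmetric])
    qed
    finally show "(\<integral>\<^sup>+ q \<in> S k. h q \<partial>lborel) \<le> ennreal (32 * R * (1/2)^k)" .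
  qed (auto intro: summableI)
  also have "\<dots> = ennreal (\<Sum>k. 32 * R * (1/2)^k)"
    using R by (intro suminf_ennreal2) (auto intro!: summable_mult summable_geometric)
  also have "\<dots> < \<infinity>" by simp
  finally show ?thesis unfolding h_def .
qed

lemma suminf_const_ennreal_inf:
  assumes c: "c > (0::real)"
  shows "(\<Sum>k::nat. ennreal c) = \<infinity>"
proof (rule ccontr)
  assume ne: "(\<Sum>k::nat. ennreal c) \<noteq> \<infinity>"
  obtain r where r: "r \<ge> 0" "(\<Sum>k::nat. ennreal c) = ennreal r"
  proof (cases "(\<Sum>k::nat. ennreal c)" rule: ennreal_cases)
    case (real r) then show ?thesis using that by blast
  next
    case top then show ?thesis using ne by simp
  qed
  obtain n :: nat where n: "r / c < real n" using reals_Archimedean2 by blast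
  have "(\<Sum>k<n. ennreal c) \<le> (\<Sum>k. ennreal c)"
    by (rule sum_le_suminf[OF summableI]) simp_all
  moreover have "(\<Sum>k<n. ennreal c) = ennreal (real n * c)"
    using c by (simp add: ennreal_of_nat_eq_real_of_nat ennreal_mult)
  ultimately have "ennreal (real n * c) \<le> ennreal r" using r by simp
  then have "real n * c \<le> r" using r(1) by (simp only: ennreal_le_iff)
  then show False using n c by (simp add: field_simps)
qed

lemma inv4_infinite:
  fixes q0 :: "real^3"
  assumes q0: "q0 \<in> Tbox" and s: "s > 0"
  shows "(\<integral>\<^sup>+ q \<in> ball q0 s \<inter> Tbox. ennreal (1 / (norm (q - q0))^4) \<partial>lborel) = \<infinity>"
proof -
  define h where "h = (\<lambda>q::real^3. ennreal (1 / (norm (q - q0))^4))"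
  define m where "m = Min (range (\<lambda>i. q0$i + pi))"
  have pos: "0 < q0$i + pi" for i
  proof -
    have "- pi < q0$i" using q0 by (simp add: Tbox_def)
    then show ?thesis by linarith
  qed
  have m: "m > 0" unfolding m_def using pos by (subst Min_gr_iff) auto
  have mle: "m \<le> q0$i + pi" for i unfolding m_def by (rule Min_le) auto
  define a where "a = min (s/4) (m/2)"
  have a: "a > 0" "a \<le> s/4" "a \<le> m/2" using s m by (auto simp: a_def)
  define C where "C = (\<lambda>k::nat. box (q0 + (\<chi> i. - (a / 2^k))) (q0 + (\<chi> i. - (a / 2^(Suc k)))))"
  have Cmem: "q \<in> C k \<longleftrightarrow> (\<forall>i. q0$i - a/2^k < q$i \<and> q$i < q0$i - a / 2^(Suc k))" for q k
    unfolding C_def mem_box_cart by simp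
  have Cmeas: "C k \<in> sets lborel" for k unfolding C_def by auto
  have hmeas: "h \<in> borel_measurable lborel" unfolding h_def by measurable
  have disj: "disjoint_family C"
  proof (unfold disjoint_family_on_def, intro ballI impI)
    fix m n :: nat assume "m \<noteq> n"
    have *: "C a' \<inter> C b = {}" if "a' < b" for a' b
    proof -
      have p: "(2::real)^(Suc a') \<le> 2^b" by (rule power_increasing) (use that in auto)
      have "a / 2^b \<le> a / 2^(Suc a')" using a p by (intro divide_left_mono) auto
      show ?thesis
      proof (rule ccontr)
        assume "C a' \<inter> C b \<noteq> {}"
        then obtain q where "q \<in> C a'" "q \<in> C b" by blast
        then have "q$1 < q0$1 - a/2^(Suc a')" "q0$1 - a/2^b < q$1" using Cmem by blast+
        then show False using \<open>a / 2^b \<le> a / 2^(Suc a')\<close> by linarith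
      qed
    qed
    show "C m \<inter> C n = {}"
      using *[of m n] *[of n m] \<open>m \<noteq> n\<close> by (cases "m < n") (auto simp: Int_commute)
  qed
  have sub: "(\<Union>k. C k) \<subseteq> ball q0 s \<inter> Tbox"
  proof
    fix q assume "q \<in> (\<Union>k. C k)"
    then obtain k where k: "q \<in> C k" by blast
    have ak: "a / 2^k \<le> a" using a by (simp add: field_simps)
    have ci: "\<bar>(q - q0)$i\<bar> < a" for i
    proof -
      have "q0$i - a/2^k < q$i" "q$i < q0$i - a / 2^(Suc k)" using k Cmem by blast+
      moreover have "0 < a / 2^(Suc k)" using a by simp
      ultimately show ?thesis using ak by (simp add: abs_less_iff; linarith)
    qed
    have "norm (q - q0) \<le> (\<Sum>i\<in>UNIV. \<bar>(q - q0)$i\<bar>)" by (rule norm_le_l1_cart)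
    also have "\<dots> < (\<Sum>i\<in>(UNIV::3 set). a)" by (rule sum_strict_mono) (use ci in auto)
    also have "\<dots> = 3 * a" by simp
    also have "\<dots> < s" using a s by linarith
    finally have "q \<in> ball q0 s" by (simp add: dist_norm norm_minus_commute)
    moreover have "q \<in> Tbox" unfolding Tbox_def
    proof (intro CollectI allI conjI)
      fix i
      have "q0$i - a/2^k < q$i" "q$i < q0$i - a / 2^(Suc k)" using k unfolding Cmem by auto
      moreover have "q0$i \<le> pi" using q0 unfolding Tbox_def by auto
      moreover have "0 < a / 2^(Suc k)" using a by simp
      ultimately show "- pi < q $ i" "q $ i \<le> pi" using ak mle[of i] a by linarith+
    qed
    ultimately show "q \<in> ball q0 s \<inter> Tbox" by blast
  qed
  have low: "ennreal (1 / (648 * a)) \<le> (\<integral>\<^sup>+ q \<in> C k. h q \<partial>lborel)" for k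
  proof -
    define b :: real where "b = 2^k"
    have b: "b > 0" by (simp add: b_def)
    have m1: "(\<integral>\<^sup>+ q. ennreal ((b / (3 * a))^4) * indicator (C k) q \<partial>lborel) \<le> (\<integral>\<^sup>+ q \<in> C k. h q \<partial>lborel)"
    proof (intro nn_integral_mono)
      fix q
      show "ennreal ((b / (3 * a))^4) * indicator (C k) q \<le> h q * indicator (C k) q"
      proof (cases "q \<in> C k")
        case True
        have ci: "\<bar>(q - q0)$i\<bar> < a / b" for i
        proof -
          have "q0$i - a/2^k < q$i" "q$i < q0$i - a / 2^(Suc k)" using True Cmem by blast+
          moreover have "0 < a / 2^(Suc k)" using a by simp
          ultimately show ?thesis by (simp add: abs_less_iff b_def; linarith)
        qed
        have pos: "0 < \<bar>(q - q0)$1\<bar>"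
        proof -
          have "q$1 < q0$1 - a / 2^(Suc k)" using True Cmem by blast
          moreover have "0 < a / 2^(Suc k)" using a by simp
          ultimately show ?thesis by simp
        qed
        have "norm (q - q0) \<le> (\<Sum>i\<in>UNIV. \<bar>(q - q0)$i\<bar>)" by (rule norm_le_l1_cart)
        also have "\<dots> < (\<Sum>i\<in>(UNIV::3 set). a / b)" by (rule sum_strict_mono) (use ci in auto)
        also have "\<dots> = 3 * a / b" by simp
        finally have n1: "norm (q - q0) < 3 * a / b" .
        have n0: "0 < norm (q - q0)"
          using pos component_le_norm_cart[of "q - q0" 1] by linarith
        have "(b / (3 * a))^4 = 1 / (3 * a / b)^4" by (simp add: power_divide)
        also have "\<dots> \<le> 1 / (norm (q - q0))^4"
          using n0 n1 by (intro divide_left_mono power_mono mult_pos_pos) auto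
        finally show ?thesis using True by (simp add: h_def ennreal_leI)
      qed simp
    qed
    have m2: "(\<integral>\<^sup>+ q. ennreal ((b / (3 * a))^4) * indicator (C k) q \<partial>lborel)
        = ennreal ((b / (3 * a))^4) * emeasure lborel (C k)"
      by (rule nn_integral_cmult_indicator[OF Cmeas])
    have m3: "emeasure lborel (C k) = ennreal ((a / (2 * b))^3)"
    proof -
      have "- (a / 2^k) \<le> - (a / 2^(Suc k))" using a by (simp add: field_simps)
      from cube_vol(2)[OF this, of q0] have "emeasure lborel (C k) = ennreal ((- (a / 2^(Suc k)) - - (a / 2^k))^3)"
        unfolding C_def by simp
      also have "(- (a / 2^(Suc k)) - - (a / 2^k)) = a / (2 * b)" by (simp add: b_def field_simps)
      finally show ?thesis .
    qed
    have m4: "ennreal ((b / (3 * a))^4) * ennreal ((a / (2 * b))^3) \<ge> ennreal (1 / (648 * a))"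
    proof -
      have "(b / (3 * a))^4 * (a / (2 * b))^3 = b / (648 * a)"
        using a b by (simp add: field_simps power2_eq_square power3_eq_cube power4_eq_xxxx)
      moreover have "1 / (648 * a) \<le> b / (648 * a)"
      proof -
        have "1 \<le> b" unfolding b_def by simp
        then show ?thesis using a by (intro divide_right_mono) auto
      qed
      ultimately show ?thesis by (simp add: ennreal_mult'[symmetric] ennreal_leI)
    qed
    have "ennreal (1 / (648 * a)) \<le> (\<integral>\<^sup>+ q. ennreal ((b / (3 * a))^4) * indicator (C k) q \<partial>lborel)"
      using m4 unfolding m2 m3 .
    then show ?thesis using m1 by (rule order_trans)
  qed
  have "\<infinity> = (\<Sum>k. ennreal (1 / (648 * a)))"
    using a by (intro suminf_const_ennreal_inf[symmetric]) simp
  also have "\<dots> \<le> (\<Sum>k. (\<integral>\<^sup>+ q \<in> C k. h q \<partial>lborel))"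
    by (intro suminf_le low) (auto intro: summableI)
  also have "\<dots> = (\<integral>\<^sup>+ q \<in> (\<Union>k. C k). h q \<partial>lborel)"
    by (rule nn_integral_disjoint_family[OF hmeas Cmeas disj, symmetric])
  also have "\<dots> \<le> (\<integral>\<^sup>+ q \<in> ball q0 s \<inter> Tbox. h q \<partial>lborel)"
  proof (intro nn_integral_mono)
    fix q
    show "h q * indicator (\<Union>k. C k) q \<le> h q * indicator (ball q0 s \<inter> Tbox) q"
    proof (cases "q \<in> (\<Union>k. C k)")
      case True
      then have "q \<in> ball q0 s \<inter> Tbox" using sub by (rule subsetD[rotated])
      then show ?thesis using True by simp
    qed simp
  qed
  finally have "\<infinity> \<le> (\<integral>\<^sup>+ q \<in> ball q0 s \<inter> Tbox. h q \<partial>lborel)" .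
  then have "(\<integral>\<^sup>+ q \<in> ball q0 s \<inter> Tbox. h q \<partial>lborel) = \<infinity>" unfolding infinity_ennreal_def using top_unique by blast
  then show ?thesis by (simp only: h_def)
qed

lemma Tbox_sets_c: "Tbox \<in> sets (completion lborel)"
  using Tbox_sets by simp

lemma T3_nn: "nn_integral T3 f = (\<integral>\<^sup>+ x. f x * indicator Tbox x \<partial>lborel)"
  unfolding T3_def
  by (simp add: nn_integral_restrict_space Tbox_sets_c nn_integral_completion)

lemma meas_T3: "f \<in> borel_measurable borel \<Longrightarrow> f \<in> borel_measurable T3"
  unfolding T3_def
  by (intro measurable_restrict_space1 measurable_completion) simp

lemma AE_T3_ne: "AE q in T3. q \<noteq> c"
  unfolding T3_def
proof (subst AE_restrict_space_iff)
  show "Tbox \<inter> space (completion lborel) \<in> sets (completion lborel)" using Tbox_sets_c by simp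
  show "AE x in completion lborel. x \<in> Tbox \<longrightarrow> x \<noteq> c"
    using AE_completion[OF AE_lborel_singleton[of c]] by (rule AE_mp) auto
qed

lemma meas_AE:
  fixes f f0 :: "real^3 \<Rightarrow> real"
  assumes f0: "f0 \<in> borel_measurable T3" and ae: "AE x in T3. f x = f0 x"
  shows "f \<in> borel_measurable T3"
proof -
  have TS: "Tbox \<in> sets lebesgue" using Tbox_sets_c by simp
  have "(\<lambda>x. if x \<in> Tbox then f0 x else 0) \<in> borel_measurable lebesgue"
    using f0 unfolding T3_def by (rule borel_measurable_if_I[OF _ TS])
  moreover have "AE x in lebesgue. (if x \<in> Tbox then f0 x else 0) = (if x \<in> Tbox then f x else 0)"
  proof -
    have "AE x in lebesgue. x \<in> Tbox \<longrightarrow> f x = f0 x"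
      using ae unfolding T3_def by (subst (asm) AE_restrict_space_iff) (use TS in auto)
    then show ?thesis by (rule AE_mp) auto
  qed
  ultimately have "(\<lambda>x. if x \<in> Tbox then f x else 0) \<in> borel_measurable lebesgue"
    by (rule borel_measurable_AE)
  then show ?thesis unfolding T3_def using borel_measurable_if[OF TS] by blast
qed

lemma inv_sq_T3:
  fixes z :: "real^3"
  shows "integrable T3 (\<lambda>q. 1 / (norm (q - z))\<^sup>2)"
proof -
  define R where "R = norm z + 20"
  have R: "R > 0" unfolding R_def by (smt (verit) norm_ge_zero)
  have meas: "(\<lambda>q::real^3. 1 / (norm (q - z))\<^sup>2) \<in> borel_measurable borel" by measurable
  have sub: "Tbox \<subseteq> cball z R"
  proof
    fix q assume "q \<in> Tbox"
    then have "norm q \<le> 3 * pi" by (rule Tbox_norm)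
    then have "norm q \<le> 20" using pi_less_4 by linarith
    then have "dist z q \<le> R" unfolding R_def dist_norm
      by (smt (verit) norm_triangle_ineq4)
    then show "q \<in> cball z R" by simp
  qed
  have "(\<integral>\<^sup>+ q. ennreal (norm (1 / (norm (q - z))\<^sup>2)) \<partial>T3)
      = (\<integral>\<^sup>+ q. ennreal (1 / (norm (q - z))\<^sup>2) * indicator Tbox q \<partial>lborel)"
    unfolding T3_nn by simp
  also have "\<dots> \<le> (\<integral>\<^sup>+ q \<in> cball z R. ennreal (1 / (norm (q - z))\<^sup>2) \<partial>lborel)"
  proof (intro nn_integral_mono)
    fix q
    show "ennreal (1 / (norm (q - z))\<^sup>2) * indicator Tbox q \<le> ennreal (1 / (norm (q - z))\<^sup>2) * indicator (cball z R) q"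
    proof (cases "q \<in> Tbox")
      case True then have "q \<in> cball z R" using sub by blast
      then show ?thesis using True by simp
    qed simp
  qed
  also have "\<dots> < \<infinity>" by (rule inv_sq_finite[OF R])
  finally show ?thesis
    using meas_T3[OF meas] by (simp add: integrable_iff_bounded)
qed

lemma inv4_T3:
  fixes q0 :: "real^3"
  assumes "q0 \<in> Tbox" "s > 0"
  shows "(\<integral>\<^sup>+ q. ennreal (1 / (norm (q - q0))^4) * indicator (ball q0 s) q \<partial>T3) = \<infinity>"
proof -
  have "(\<integral>\<^sup>+ q. ennreal (1 / (norm (q - q0))^4) * indicator (ball q0 s) q \<partial>T3)
      = (\<integral>\<^sup>+ q \<in> ball q0 s \<inter> Tbox. ennreal (1 / (norm (q - q0))^4) \<partial>lborel)"
    unfolding T3_nn by (simp add: indicator_inter_arith mult.assoc)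
  also have "\<dots> = \<infinity>" by (rule inv4_infinite[OF assms])
  finally show ?thesis .
qed

lemma T3_finite: "finite_measure T3"
proof (rule finite_measureI)
  have "emeasure T3 (space T3) = emeasure (completion lborel) Tbox"
    unfolding T3_def by (simp add: emeasure_restrict_space Tbox_sets_c)
  also have "\<dots> = emeasure lborel Tbox" using Tbox_sets by simp
  also have "\<dots> \<le> emeasure lborel (cbox ((0::real^3) + (\<chi> i. - pi)) (0 + (\<chi> i. pi)))"
  proof -
    have "Tbox \<subseteq> cbox ((0::real^3) + (\<chi> i. - pi)) (0 + (\<chi> i. pi))"
      unfolding Tbox_def by (auto simp: mem_box_cart less_imp_le)
    then show ?thesis by (intro emeasure_mono) auto
  qed
  also have "\<dots> = ennreal ((pi - - pi)^3)" by (rule cube_vol(1)) simp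
  also have "\<dots> < \<infinity>" by simp
  finally show "emeasure T3 (space T3) \<noteq> \<infinity>" by simp
qed

lemma T3_const_int: "integrable T3 (\<lambda>_. (k::real))"
  using finite_measure.integrable_const[OF T3_finite] .

lemma AE_T3_Tbox: "AE q in T3. q \<in> Tbox"
  by (rule AE_I2) (simp add: T3_def)

lemma space_T3: "space T3 = Tbox" by (simp add: T3_def)

locale Sett =
  fixes \<phi> :: "real^3 \<Rightarrow> real" and W :: "real^3 \<Rightarrow> real" and z0 :: "real^3" and \<mu> :: real
  assumes phi_per: "periodic3 \<phi>" and phi_an: "real_analytic_on UNIV \<phi>"
    and W_per: "periodic3 W" and W_cont: "continuous_on UNIV W"
    and W_max: "\<And>q. W q \<le> W z0" and W_uniq: "\<And>q. W q = W z0 \<Longrightarrow> in_lattice (q - z0)"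
    and W_nondeg: "neg_def_hessian W z0" and mu_pos: "\<mu> > 0"
begin

definition "MM = (SUP q\<in>Tbox. W q)"
definition "II = (LINT s|T3. (\<phi> s)\<^sup>2 / (MM - W s))"
definition "RS f \<longleftrightarrow> integrable T3 f \<and> \<not> integrable T3 (\<lambda>q. (f q)\<^sup>2) \<and>
     (AE q in T3. (W q - MM) * f q + \<mu> * \<phi> q * (LINT t|T3. \<phi> t * f t) = 0)"

definition "qs = (SOME q. q \<in> Tbox \<and> in_lattice (q - z0))"

lemma qs: "qs \<in> Tbox" "in_lattice (qs - z0)"
  using someI_ex[OF rep_exists[of z0]] unfolding qs_def by auto

lemma W_qs: "W qs = W z0" using per_eq[OF W_per qs(2)] .
lemma phi_qs: "\<phi> qs = \<phi> z0" using per_eq[OF phi_per qs(2)] .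

lemma MM_eq: "MM = W z0"
  unfolding MM_def
proof (rule cSup_eq_maximum)
  show "W z0 \<in> W ` Tbox" using qs(1) W_qs by (metis image_eqI)
qed (use W_max in auto)

lemma MW_nonneg: "0 \<le> MM - W q" using W_max MM_eq by simp

lemma zero_iff: "q \<in> Tbox \<Longrightarrow> W q = MM \<longleftrightarrow> q = qs"
proof
  assume q: "q \<in> Tbox" and "W q = MM"
  then have "in_lattice (q - z0)" using W_uniq MM_eq by simp
  then have "in_lattice (q - qs)" using lat_diff[OF _ qs(2)] by (metis diff_diff_eq2 diff_add_cancel add_diff_cancel_left')
  then show "q = qs" using rep_unique[OF q qs(1)] by blast
next
  assume "q = qs" then show "W q = MM" using W_qs MM_eq by simp
qed

lemma MW_pos: "q \<in> Tbox \<Longrightarrow> q \<noteq> qs \<Longrightarrow> 0 < MM - W q"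
  using zero_iff MW_nonneg by (metis diff_gt_0_iff_gt order_le_less W_max MM_eq)

lemma phi_cont: "continuous_on UNIV \<phi>" by (rule analytic_cont[OF phi_an])

lemma near:
  obtains r0 c C where "r0 > 0" "c > 0" "C > 0"
    "\<And>v h. in_lattice v \<Longrightarrow> norm h < r0 \<Longrightarrow>
        c * (norm h)\<^sup>2 \<le> MM - W (qs + v + h) \<and> MM - W (qs + v + h) \<le> C * (norm h)\<^sup>2"
proof -
  obtain r0 c C where r0: "r0 > 0" "c > 0" "C > 0" and HB: "\<And>h. norm h < r0 \<Longrightarrow>
      c * (norm h)\<^sup>2 \<le> W z0 - W (z0 + h) \<and> W z0 - W (z0 + h) \<le> C * (norm h)\<^sup>2"
    using hess_bounds[OF W_nondeg W_max] by blast
  have "W (qs + v + h) = W (z0 + h)" if "in_lattice v" for v h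
  proof (rule per_eq[OF W_per])
    have "(qs + v + h) - (z0 + h) = (qs - z0) + v" by simp
    then show "in_lattice (qs + v + h - (z0 + h))" using lat_add[OF qs(2) that] by (simp add: algebra_simps)
  qed
  then show ?thesis using that r0 HB MM_eq by auto
qed

lemma far:
  assumes r: "r > 0"
  obtains m where "m > 0" "\<And>q. q \<in> Tbox \<Longrightarrow> (\<forall>v\<in>Vset. r \<le> norm (q - qs - v)) \<Longrightarrow> m \<le> MM - W q"
proof -
  define B where "B = cbox ((0::real^3) + (\<chi> i. - pi)) (0 + (\<chi> i. pi))"
  define K where "K = B \<inter> (\<Inter>v\<in>Vset. {q. r \<le> norm (q - qs - v)})"
  have TB: "Tbox \<subseteq> B" unfolding Tbox_def B_def by (auto simp: mem_box_cart less_imp_le)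
  have cK: "compact K" unfolding K_def B_def
    by (intro compact_Int_closed compact_cbox closed_INT) (auto intro!: closed_Collect_le continuous_intros)
  show ?thesis
  proof (cases "K = {}")
    case True
    show ?thesis
    proof (rule that[of 1])
      fix q assume "q \<in> Tbox" "\<forall>v\<in>Vset. r \<le> norm (q - qs - v)"
      then have "q \<in> K" using TB unfolding K_def by auto
      then show "1 \<le> MM - W q" using True by simp
    qed simp
  next
    case False
    have "continuous_on K (\<lambda>q. MM - W q)"
      using W_cont by (intro continuous_intros) (auto intro: continuous_on_subset)
    then obtain q1 where q1: "q1 \<in> K" and mn: "\<And>q. q \<in> K \<Longrightarrow> MM - W q1 \<le> MM - W q"
      using continuous_attains_inf[OF cK False] by blast
    have "MM - W q1 \<noteq> 0"
    proof
      assume "MM - W q1 = 0"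
      then have "in_lattice (q1 - z0)" using W_uniq MM_eq by simp
      then have lv: "in_lattice (q1 - qs)" using lat_diff[OF _ qs(2)]
        by (metis diff_diff_eq2 diff_add_cancel add_diff_cancel_left')
      have "\<bar>(q1 - qs)$i\<bar> < 4 * pi" for i
      proof -
        have "q1 \<in> B" using q1 unfolding K_def by auto
        then have "\<bar>q1$i\<bar> \<le> pi" unfolding B_def mem_box_cart by (simp add: abs_le_iff) (smt (verit))
        moreover have "\<bar>qs$i\<bar> \<le> pi" by (rule Tbox_bounded[OF qs(1)])
        ultimately show ?thesis by (auto simp: abs_le_iff abs_less_iff) (use pi_gt_zero in linarith)+
      qed
      then have "q1 - qs \<in> Vset" using lat_in_Vset[OF lv] by blast
      then have "r \<le> norm (q1 - qs - (q1 - qs))" using q1 unfolding K_def by blast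
      then show False using r by simp
    qed
    then have m: "MM - W q1 > 0" using MW_nonneg[of q1] by linarith
    show ?thesis
    proof (rule that[OF m])
      fix q assume "q \<in> Tbox" "\<forall>v\<in>Vset. r \<le> norm (q - qs - v)"
      then have "q \<in> K" using TB unfolding K_def by auto
      then show "MM - W q1 \<le> MM - W q" by (rule mn)
    qed
  qed
qed

lemma phi_bound:
  obtains P where "P \<ge> 0" "\<And>q. q \<in> Tbox \<Longrightarrow> \<bar>\<phi> q\<bar> \<le> P"
proof -
  define B where "B = cbox ((0::real^3) + (\<chi> i. - pi)) (0 + (\<chi> i. pi))"
  have TB: "Tbox \<subseteq> B" unfolding Tbox_def B_def by (auto simp: mem_box_cart less_imp_le)
  have "compact (\<phi> ` B)" unfolding B_def
    by (intro compact_continuous_image continuous_on_subset[OF phi_cont]) auto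
  then obtain P where "P > 0" "\<And>x. x \<in> \<phi> ` B \<Longrightarrow> norm x \<le> P"
    using compact_imp_bounded bounded_pos by metis
  then show ?thesis using that TB by (metis less_imp_le image_eqI real_norm_def subsetD)
qed

lemma key_bounds:
  obtains r c C m P K where "r > 0" "c > 0" "C > 0" "m > 0" "P \<ge> 0"
    "\<And>q. q \<in> Tbox \<Longrightarrow> \<bar>\<phi> q\<bar> \<le> P"
    "\<And>v h. in_lattice v \<Longrightarrow> norm h < r \<Longrightarrow>
        c * (norm h)\<^sup>2 \<le> MM - W (qs + v + h) \<and> MM - W (qs + v + h) \<le> C * (norm h)\<^sup>2"
    "\<And>h. norm h < r \<Longrightarrow> \<bar>\<phi> (qs + h) - \<phi> qs\<bar> \<le> K * norm h"
    "\<And>q. q \<in> Tbox \<Longrightarrow> (\<forall>v\<in>Vset. r \<le> norm (q - qs - v)) \<Longrightarrow> m \<le> MM - W q"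
proof -
  obtain r0 c C where r0: "r0 > 0" "c > 0" "C > 0" and nr: "\<And>v h. in_lattice v \<Longrightarrow> norm h < r0 \<Longrightarrow>
        c * (norm h)\<^sup>2 \<le> MM - W (qs + v + h) \<and> MM - W (qs + v + h) \<le> C * (norm h)\<^sup>2"
    using near by blast
  obtain K \<rho> where \<rho>: "\<rho> > 0" and L: "\<And>y. dist y qs < \<rho> \<Longrightarrow> \<bar>\<phi> y - \<phi> qs\<bar> \<le> K * dist y qs"
    using analytic_lip[OF phi_an, of qs] by blast
  define r where "r = min r0 \<rho>"
  have r: "r > 0" using r0 \<rho> by (simp add: r_def)
  obtain m where m: "m > 0" "\<And>q. q \<in> Tbox \<Longrightarrow> (\<forall>v\<in>Vset. r \<le> norm (q - qs - v)) \<Longrightarrow> m \<le> MM - W q"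
    using far[OF r] by blast
  obtain P where P: "P \<ge> 0" "\<And>q. q \<in> Tbox \<Longrightarrow> \<bar>\<phi> q\<bar> \<le> P" using phi_bound by blast
  show ?thesis
  proof (rule that[OF r r0(2,3) m(1) P])
    show "c * (norm h)\<^sup>2 \<le> MM - W (qs + v + h) \<and> MM - W (qs + v + h) \<le> C * (norm h)\<^sup>2"
      if "in_lattice v" "norm h < r" for v h using nr[OF that(1)] that(2) by (simp add: r_def)
    show "\<bar>\<phi> (qs + h) - \<phi> qs\<bar> \<le> K * norm h" if "norm h < r" for h
      using L[of "qs + h"] that by (simp add: r_def dist_norm)
  qed (use m in auto)
qed


lemma meas_phi[measurable]: "\<phi> \<in> borel_measurable borel"
  by (rule borel_measurable_continuous_onI[OF phi_cont])

lemma meas_W[measurable]: "W \<in> borel_measurable borel"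
  by (rule borel_measurable_continuous_onI[OF W_cont])

lemma g_meas: "(\<lambda>q. \<phi> q / (MM - W q)) \<in> borel_measurable T3"
  by (intro meas_T3) measurable

lemma g_int: "integrable T3 (\<lambda>q. \<phi> q / (MM - W q))"
proof -
  obtain r c C m P K where r: "r > 0" "c > 0" "C > 0" "m > 0" "P \<ge> 0"
    and Pb: "\<And>q. q \<in> Tbox \<Longrightarrow> \<bar>\<phi> q\<bar> \<le> P"
    and nr: "\<And>v h. in_lattice v \<Longrightarrow> norm h < r \<Longrightarrow>
        c * (norm h)\<^sup>2 \<le> MM - W (qs + v + h) \<and> MM - W (qs + v + h) \<le> C * (norm h)\<^sup>2"
    and fr: "\<And>q. q \<in> Tbox \<Longrightarrow> (\<forall>v\<in>Vset. r \<le> norm (q - qs - v)) \<Longrightarrow> m \<le> MM - W q"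
    using key_bounds by metis
  define G where "G = (\<lambda>q. P / m + (\<Sum>v\<in>Vset. (P / c) * (1 / (norm (q - (qs + v)))\<^sup>2)))"
  have Gint: "integrable T3 G" unfolding G_def
    by (intro Bochner_Integration.integrable_add T3_const_int Bochner_Integration.integrable_sum Bochner_Integration.integrable_mult_right inv_sq_T3)
  have bd: "\<bar>\<phi> q / (MM - W q)\<bar> \<le> G q" if q: "q \<in> Tbox" for q
  proof -
    have tnn: "0 \<le> (P / c) * (1 / (norm (q - (qs + v)))\<^sup>2)" for v using r by simp
    have snn: "0 \<le> (\<Sum>v\<in>Vset. (P / c) * (1 / (norm (q - (qs + v)))\<^sup>2))" by (intro sum_nonneg tnn)
    have Gnn: "0 \<le> G q" unfolding G_def using snn r by simp
    consider (far) "\<forall>v\<in>Vset. r \<le> norm (q - qs - v)" | (cl) v0 where "v0 \<in> Vset" "norm (q - qs - v0) < r"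
      by (meson not_le)
    then show ?thesis
    proof cases
      case far
      have mW: "m \<le> MM - W q" by (rule fr[OF q far])
      have "\<bar>\<phi> q / (MM - W q)\<bar> = \<bar>\<phi> q\<bar> / (MM - W q)" using MW_nonneg[of q] by simp
      also have "\<dots> \<le> P / m" using Pb[OF q] mW r by (intro frac_le) auto
      also have "\<dots> \<le> G q" unfolding G_def using snn by simp
      finally show ?thesis .
    next
      case cl
      define h where "h = q - qs - v0"
      have hq: "qs + v0 + h = q" by (simp add: h_def)
      have nq: "norm (q - (qs + v0)) = norm h" by (simp add: h_def algebra_simps)
      have lat: "in_lattice v0" by (rule Vset_lat[OF cl(1)])
      have bb: "c * (norm h)\<^sup>2 \<le> MM - W q" "MM - W q \<le> C * (norm h)\<^sup>2"
        using nr[OF lat, of h] cl(2) hq by (auto simp: h_def)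
      show ?thesis
      proof (cases "h = 0")
        case True
        then have "MM - W q = 0" using bb MW_nonneg[of q] by simp
        then show ?thesis using Gnn by simp
      next
        case False
        then have pos: "0 < c * (norm h)\<^sup>2" using r by simp
        have "\<bar>\<phi> q / (MM - W q)\<bar> = \<bar>\<phi> q\<bar> / (MM - W q)" using MW_nonneg[of q] by simp
        also have "\<dots> \<le> P / (c * (norm h)\<^sup>2)" using Pb[OF q] bb(1) pos r by (intro frac_le) auto
        also have "\<dots> = (P / c) * (1 / (norm (q - (qs + v0)))\<^sup>2)" by (simp add: nq)
        also have "\<dots> \<le> (\<Sum>v\<in>Vset. (P / c) * (1 / (norm (q - (qs + v)))\<^sup>2))"
          by (rule member_le_sum[OF cl(1) tnn finite_Vset])
        also have "\<dots> \<le> G q" unfolding G_def using r by simp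
        finally show ?thesis .
      qed
    qed
  qed
  show ?thesis
  proof (rule Bochner_Integration.integrable_bound[OF Gint g_meas])
    show "AE x in T3. norm (\<phi> x / (MM - W x)) \<le> norm (G x)"
    proof (rule AE_mp[OF AE_T3_Tbox], intro AE_I2 impI)
      fix x assume "x \<in> Tbox"
      then have "\<bar>\<phi> x / (MM - W x)\<bar> \<le> G x" by (rule bd)
      then show "norm (\<phi> x / (MM - W x)) \<le> norm (G x)"
        unfolding real_norm_def by (meson abs_ge_self order_trans)
    qed
  qed
qed


lemma g2_int:
  assumes z: "\<phi> qs = 0"
  shows "integrable T3 (\<lambda>q. (\<phi> q / (MM - W q))\<^sup>2)"
proof -
  obtain r c C m P K where r: "r > 0" "c > 0" "C > 0" "m > 0" "P \<ge> 0"
    and Pb: "\<And>q. q \<in> Tbox \<Longrightarrow> \<bar>\<phi> q\<bar> \<le> P"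
    and nr: "\<And>v h. in_lattice v \<Longrightarrow> norm h < r \<Longrightarrow>
        c * (norm h)\<^sup>2 \<le> MM - W (qs + v + h) \<and> MM - W (qs + v + h) \<le> C * (norm h)\<^sup>2"
    and Lp: "\<And>h. norm h < r \<Longrightarrow> \<bar>\<phi> (qs + h) - \<phi> qs\<bar> \<le> K * norm h"
    and fr: "\<And>q. q \<in> Tbox \<Longrightarrow> (\<forall>v\<in>Vset. r \<le> norm (q - qs - v)) \<Longrightarrow> m \<le> MM - W q"
    using key_bounds by metis
  define G where "G = (\<lambda>q. (P / m)\<^sup>2 + (\<Sum>v\<in>Vset. (K / c)\<^sup>2 * (1 / (norm (q - (qs + v)))\<^sup>2)))"
  have Gint: "integrable T3 G" unfolding G_def
    by (intro Bochner_Integration.integrable_add T3_const_int Bochner_Integration.integrable_sum Bochner_Integration.integrable_mult_right inv_sq_T3)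
  have bd: "(\<phi> q / (MM - W q))\<^sup>2 \<le> G q" if q: "q \<in> Tbox" for q
  proof -
    have tnn: "0 \<le> (K / c)\<^sup>2 * (1 / (norm (q - (qs + v)))\<^sup>2)" for v by simp
    have snn: "0 \<le> (\<Sum>v\<in>Vset. (K / c)\<^sup>2 * (1 / (norm (q - (qs + v)))\<^sup>2))" by (intro sum_nonneg tnn)
    have Gnn: "0 \<le> G q" unfolding G_def using snn by simp
    consider (far) "\<forall>v\<in>Vset. r \<le> norm (q - qs - v)" | (cl) v0 where "v0 \<in> Vset" "norm (q - qs - v0) < r"
      by (meson not_le)
    then show ?thesis
    proof cases
      case far
      have mW: "m \<le> MM - W q" by (rule fr[OF q far])
      have "\<bar>\<phi> q / (MM - W q)\<bar> = \<bar>\<phi> q\<bar> / (MM - W q)" using MW_nonneg[of q] by simp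
      also have "\<dots> \<le> P / m" using Pb[OF q] mW r by (intro frac_le) auto
      finally have "\<bar>\<phi> q / (MM - W q)\<bar>\<^sup>2 \<le> (P / m)\<^sup>2" by (intro power_mono) auto
      then have "(\<phi> q / (MM - W q))\<^sup>2 \<le> (P / m)\<^sup>2" by (simp only: power2_abs)
      also have "\<dots> \<le> G q" unfolding G_def using snn by simp
      finally show ?thesis .
    next
      case cl
      define h where "h = q - qs - v0"
      have hq: "qs + v0 + h = q" by (simp add: h_def)
      have nq: "norm (q - (qs + v0)) = norm h" by (simp add: h_def algebra_simps)
      have lat: "in_lattice v0" by (rule Vset_lat[OF cl(1)])
      have hr: "norm h < r" using cl(2) by (simp add: h_def)
      have bb: "c * (norm h)\<^sup>2 \<le> MM - W q" "MM - W q \<le> C * (norm h)\<^sup>2"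
        using nr[OF lat hr] hq by auto
      show ?thesis
      proof (cases "h = 0")
        case True
        then have "MM - W q = 0" using bb MW_nonneg[of q] by simp
        then show ?thesis using Gnn by simp
      next
        case False
        then have pos: "0 < c * (norm h)\<^sup>2" using r by simp
        have "\<phi> q = \<phi> (qs + h)"
        proof (rule per_eq[OF phi_per])
          have "q - (qs + h) = v0" by (simp add: h_def)
          then show "in_lattice (q - (qs + h))" using lat by simp
        qed
        then have pq: "\<bar>\<phi> q\<bar> \<le> K * norm h" using Lp[OF hr] z by simp
        have "\<bar>\<phi> q / (MM - W q)\<bar> = \<bar>\<phi> q\<bar> / (MM - W q)" using MW_nonneg[of q] by simp
        also have "\<dots> \<le> (K * norm h) / (c * (norm h)\<^sup>2)"
          using pq bb(1) pos by (intro frac_le) auto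
        also have "\<dots> = (K / c) * (1 / norm h)" using False r by (simp add: power2_eq_square field_simps)
        finally have "\<bar>\<phi> q / (MM - W q)\<bar>\<^sup>2 \<le> ((K / c) * (1 / norm h))\<^sup>2" by (intro power_mono) auto
        then have "(\<phi> q / (MM - W q))\<^sup>2 \<le> (K / c)\<^sup>2 * (1 / (norm (q - (qs + v0)))\<^sup>2)"
          by (simp only: power2_abs nq power_mult_distrib power_one_over)
        also have "\<dots> \<le> (\<Sum>v\<in>Vset. (K / c)\<^sup>2 * (1 / (norm (q - (qs + v)))\<^sup>2))"
          by (rule member_le_sum[OF cl(1) tnn finite_Vset])
        also have "\<dots> \<le> G q" unfolding G_def by simp
        finally show ?thesis .
      qed
    qed
  qed
  have meas: "(\<lambda>q. (\<phi> q / (MM - W q))\<^sup>2) \<in> borel_measurable T3"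
    by (intro meas_T3) measurable
  show ?thesis
  proof (rule Bochner_Integration.integrable_bound[OF Gint meas])
    show "AE x in T3. norm ((\<phi> x / (MM - W x))\<^sup>2) \<le> norm (G x)"
    proof (rule AE_mp[OF AE_T3_Tbox], intro AE_I2 impI)
      fix x assume "x \<in> Tbox"
      then have "(\<phi> x / (MM - W x))\<^sup>2 \<le> G x" by (rule bd)
      then show "norm ((\<phi> x / (MM - W x))\<^sup>2) \<le> norm (G x)"
        unfolding real_norm_def by (simp add: order_trans[OF _ abs_ge_self])
    qed
  qed
qed


lemma g2_not_int:
  assumes nz: "\<phi> qs \<noteq> 0"
  shows "\<not> integrable T3 (\<lambda>q. (\<phi> q / (MM - W q))\<^sup>2)"
proof
  assume int: "integrable T3 (\<lambda>q. (\<phi> q / (MM - W q))\<^sup>2)"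
  obtain r c C m P K where r: "r > 0" "c > 0" "C > 0" "m > 0" "P \<ge> 0"
    and Pb: "\<And>q. q \<in> Tbox \<Longrightarrow> \<bar>\<phi> q\<bar> \<le> P"
    and nr: "\<And>v h. in_lattice v \<Longrightarrow> norm h < r \<Longrightarrow>
        c * (norm h)\<^sup>2 \<le> MM - W (qs + v + h) \<and> MM - W (qs + v + h) \<le> C * (norm h)\<^sup>2"
    and Lp: "\<And>h. norm h < r \<Longrightarrow> \<bar>\<phi> (qs + h) - \<phi> qs\<bar> \<le> K * norm h"
    and fr: "\<And>q. q \<in> Tbox \<Longrightarrow> (\<forall>v\<in>Vset. r \<le> norm (q - qs - v)) \<Longrightarrow> m \<le> MM - W q"
    using key_bounds by metis
  define a where "a = \<bar>\<phi> qs\<bar>"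
  have a: "a > 0" using nz by (simp add: a_def)
  define s where "s = min r (a / (2 * (\<bar>K\<bar> + 1)))"
  have s: "s > 0" using r a by (simp add: s_def)
  define \<kappa> where "\<kappa> = a\<^sup>2 / (4 * C\<^sup>2)"
  have \<kappa>: "\<kappa> > 0" using a r by (simp add: \<kappa>_def)
  have pt: "ennreal \<kappa> * (ennreal (1 / (norm (q - qs))^4) * indicator (ball qs s) q)
      \<le> ennreal (norm ((\<phi> q / (MM - W q))\<^sup>2))" if q: "q \<in> Tbox" for q
  proof (cases "q \<in> ball qs s \<and> q \<noteq> qs")
    case False
    then show ?thesis by (auto simp: indicator_def)
  next
    case True
    define h where "h = q - qs"
    have hq: "qs + 0 + h = q" by (simp add: h_def)
    have hs: "norm h < s" using True by (simp add: h_def dist_norm norm_minus_commute)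
    have hr: "norm h < r" using hs by (simp add: s_def)
    have h0: "norm h > 0" using True by (simp add: h_def)
    have up: "MM - W q \<le> C * (norm h)\<^sup>2" using nr[OF lat_zero hr] hq by simp
    have mpos: "0 < MM - W q" using MW_pos[OF q] True by blast
    have "\<bar>K\<bar> * norm h \<le> \<bar>K\<bar> * (a / (2 * (\<bar>K\<bar> + 1)))"
      using hs by (intro mult_left_mono) (auto simp: s_def)
    also have "\<dots> \<le> a / 2" using a by (simp add: field_simps)
    finally have Kh: "\<bar>K\<bar> * norm h \<le> a / 2" .
    have "\<bar>\<phi> (qs + h) - \<phi> qs\<bar> \<le> K * norm h" by (rule Lp[OF hr])
    also have "\<dots> \<le> \<bar>K\<bar> * norm h" by (simp add: mult_right_mono)
    finally have "a / 2 \<le> \<bar>\<phi> q\<bar>" using Kh unfolding a_def h_def by simp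
    then have ph: "(a / 2)\<^sup>2 \<le> (\<phi> q)\<^sup>2"
      using a by (metis abs_le_square_iff abs_of_pos half_gt_zero)
    have dn: "(MM - W q)\<^sup>2 \<le> (C * (norm h)\<^sup>2)\<^sup>2" using up mpos by (intro power_mono) auto
    have "\<kappa> * (1 / (norm h)^4) = (a / 2)\<^sup>2 / (C * (norm h)\<^sup>2)\<^sup>2"
      unfolding \<kappa>_def using h0 r by (simp add: field_simps power2_eq_square power4_eq_xxxx)
    also have "\<dots> \<le> (\<phi> q)\<^sup>2 / (MM - W q)\<^sup>2"
      using ph dn mpos by (intro frac_le) auto
    also have "\<dots> = norm ((\<phi> q / (MM - W q))\<^sup>2)" by (simp add: power_divide)
    finally have "\<kappa> * (1 / (norm (q - qs))^4) \<le> norm ((\<phi> q / (MM - W q))\<^sup>2)" by (simp add: h_def)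
    then show ?thesis using True \<kappa> by (simp add: ennreal_mult'[symmetric] ennreal_leI)
  qed
  have bs[measurable]: "ball qs s \<in> sets borel" by simp
  have meas1: "(\<lambda>q. ennreal (1 / (norm (q - qs))^4) * indicator (ball qs s) q) \<in> borel_measurable T3"
    by (intro meas_T3) measurable
  have "(\<integral>\<^sup>+ q. ennreal \<kappa> * (ennreal (1 / (norm (q - qs))^4) * indicator (ball qs s) q) \<partial>T3)
      = ennreal \<kappa> * (\<integral>\<^sup>+ q. ennreal (1 / (norm (q - qs))^4) * indicator (ball qs s) q \<partial>T3)"
    by (rule nn_integral_cmult[OF meas1])
  also have "\<dots> = ennreal \<kappa> * \<infinity>" using inv4_T3[OF qs(1) s] by simp
  also have "\<dots> = \<infinity>" using \<kappa> by (simp add: ennreal_mult_top)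
  finally have inf: "(\<integral>\<^sup>+ q. ennreal \<kappa> * (ennreal (1 / (norm (q - qs))^4) * indicator (ball qs s) q) \<partial>T3) = \<infinity>" .
  have "(\<integral>\<^sup>+ q. ennreal \<kappa> * (ennreal (1 / (norm (q - qs))^4) * indicator (ball qs s) q) \<partial>T3)
      \<le> (\<integral>\<^sup>+ q. ennreal (norm ((\<phi> q / (MM - W q))\<^sup>2)) \<partial>T3)"
    by (rule nn_integral_mono_AE, rule AE_mp[OF AE_T3_Tbox], intro AE_I2 impI pt)
  then have "(\<integral>\<^sup>+ q. ennreal (norm ((\<phi> q / (MM - W q))\<^sup>2)) \<partial>T3) = \<infinity>"
    using inf by (simp add: top_unique)
  moreover have "(\<integral>\<^sup>+ q. ennreal (norm ((\<phi> q / (MM - W q))\<^sup>2)) \<partial>T3) < \<infinity>"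
    using int by (simp add: integrable_iff_bounded)
  ultimately show False by simp
qed


lemma phi_T3[measurable]: "\<phi> \<in> borel_measurable T3" by (rule meas_T3[OF meas_phi])
lemma W_T3[measurable]: "W \<in> borel_measurable T3" by (rule meas_T3[OF meas_W])

lemma sq_factor: "(x * y * z / d)\<^sup>2 = (x * y)\<^sup>2 * (z / d)\<^sup>2" for x y z d :: real
  by (simp add: power_mult_distrib power_divide)

lemma R1:
  assumes "RS f"
  shows "\<phi> qs \<noteq> 0 \<and> \<mu> * II = 1 \<and> (\<exists>c. c \<noteq> 0 \<and> (AE q in T3. f q = \<mu> * c * \<phi> q / (MM - W q)))"
proof -
  define c where "c = (LINT t|T3. \<phi> t * f t)"
  have fi: "integrable T3 f" and nsq: "\<not> integrable T3 (\<lambda>q. (f q)\<^sup>2)"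
    and eq: "AE q in T3. (W q - MM) * f q + \<mu> * \<phi> q * c = 0"
    using assms unfolding RS_def c_def by auto
  have fm[measurable]: "f \<in> borel_measurable T3" using fi by (rule borel_measurable_integrable)
  have fe: "AE q in T3. f q = \<mu> * c * \<phi> q / (MM - W q)"
    using AE_T3_Tbox AE_T3_ne[of qs] eq
  proof (eventually_elim)
    case (elim q)
    then have d: "MM - W q \<noteq> 0" using MW_pos by force
    from elim(3) have "(MM - W q) * f q = \<mu> * c * \<phi> q" by (simp add: algebra_simps)
    then show ?case using d by (simp add: field_simps)
  qed
  have c0: "c \<noteq> 0"
  proof
    assume "c = 0"
    then have ae0: "AE q in T3. 0 = (f q)\<^sup>2" using fe by (rule_tac AE_mp) auto
    have "integrable T3 (\<lambda>q. (f q)\<^sup>2)"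
      by (rule integrable_cong_AE_imp[OF integrable_zero _ ae0]) measurable
    then show False using nsq by simp
  qed
  have p0: "\<phi> qs \<noteq> 0"
  proof
    assume "\<phi> qs = 0"
    then have i1: "integrable T3 (\<lambda>q. (\<mu> * c)\<^sup>2 * (\<phi> q / (MM - W q))\<^sup>2)"
      using g2_int by (intro Bochner_Integration.integrable_mult_right) auto
    have ae1: "AE q in T3. (\<mu> * c)\<^sup>2 * (\<phi> q / (MM - W q))\<^sup>2 = (f q)\<^sup>2"
      using fe by (rule AE_mp) (auto simp: sq_factor)
    have "integrable T3 (\<lambda>q. (f q)\<^sup>2)"
      by (rule integrable_cong_AE_imp[OF i1 _ ae1]) measurable
    then show False using nsq by simp
  qed
  have m1: "(\<lambda>t. \<phi> t * f t) \<in> borel_measurable T3" by measurable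
  have m2: "(\<lambda>t. \<phi> t * (\<mu> * c * \<phi> t / (MM - W t))) \<in> borel_measurable T3" by measurable
  have ae: "AE t in T3. \<phi> t * f t = \<phi> t * (\<mu> * c * \<phi> t / (MM - W t))" using fe by (rule AE_mp) auto
  have "c = (LINT t|T3. \<phi> t * (\<mu> * c * \<phi> t / (MM - W t)))"
    unfolding c_def[symmetric] using integral_cong_AE[OF m1 m2 ae] by (simp only: c_def)
  also have "\<dots> = (LINT t|T3. (\<mu> * c) * ((\<phi> t)\<^sup>2 / (MM - W t)))"
    by (rule Bochner_Integration.integral_cong) (auto simp: power2_eq_square)
  also have "\<dots> = (\<mu> * c) * (LINT t|T3. (\<phi> t)\<^sup>2 / (MM - W t))" by (rule integral_mult_right_zero)
  also have "\<dots> = \<mu> * c * II" by (simp only: II_def)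
  finally have "c = \<mu> * c * II" .
  then have "\<mu> * II = 1" using c0 by (metis mult.assoc mult.commute mult_cancel_right2)
  then show ?thesis using p0 c0 fe by blast
qed

lemma R2:
  assumes p0: "\<phi> qs \<noteq> 0" and mI: "\<mu> * II = 1" and C0: "C \<noteq> 0"
    and fe: "AE q in T3. f q = C * (1 / II) * \<phi> q / (MM - W q)"
  shows "RS f"
proof -
  have I0: "II \<noteq> 0" using mI by auto
  have mu: "\<mu> = 1 / II" using mI I0 by (simp add: field_simps)
  define f0 where "f0 = (\<lambda>q. C * (1 / II) * \<phi> q / (MM - W q))"
  have f0m[measurable]: "f0 \<in> borel_measurable T3" unfolding f0_def by measurable
  have f0i: "integrable T3 f0"
  proof -
    have "integrable T3 (\<lambda>q. (C * (1 / II)) * (\<phi> q / (MM - W q)))"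
      using g_int by (rule Bochner_Integration.integrable_mult_right)
    then show ?thesis unfolding f0_def by simp
  qed
  have fe': "AE q in T3. f q = f0 q" using fe unfolding f0_def .
  have fm[measurable]: "f \<in> borel_measurable T3" by (rule meas_AE[OF f0m fe'])
  have fi: "integrable T3 f"
    by (rule integrable_cong_AE_imp[OF f0i fm]) (use fe' in \<open>auto elim: AE_mp\<close>)
  have nsq: "\<not> integrable T3 (\<lambda>q. (f q)\<^sup>2)"
  proof
    assume "integrable T3 (\<lambda>q. (f q)\<^sup>2)"
    then have i1: "integrable T3 (\<lambda>q. (II / C)\<^sup>2 * (f q)\<^sup>2)"
      by (rule Bochner_Integration.integrable_mult_right)
    have ae1: "AE q in T3. (II / C)\<^sup>2 * (f q)\<^sup>2 = (\<phi> q / (MM - W q))\<^sup>2"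
      using fe' proof (rule AE_mp, intro AE_I2 impI)
      fix q assume "f q = f0 q"
      then have "f q = (C * (1 / II)) * (\<phi> q / (MM - W q))" unfolding f0_def by simp
      then have "(f q)\<^sup>2 = (C * (1 / II))\<^sup>2 * (\<phi> q / (MM - W q))\<^sup>2" by (simp only: power_mult_distrib)
      then have "(II / C)\<^sup>2 * (f q)\<^sup>2 = (II / C)\<^sup>2 * (C * (1 / II))\<^sup>2 * (\<phi> q / (MM - W q))\<^sup>2"
        by (simp only: mult.assoc)
      also have "(II / C)\<^sup>2 * (C * (1 / II))\<^sup>2 = 1" using I0 C0 by (simp add: field_simps)
      finally show "(II / C)\<^sup>2 * (f q)\<^sup>2 = (\<phi> q / (MM - W q))\<^sup>2" by simp
    qed
    have "integrable T3 (\<lambda>q. (\<phi> q / (MM - W q))\<^sup>2)"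
      by (rule integrable_cong_AE_imp[OF i1 _ ae1]) measurable
    then show False using g2_not_int[OF p0] by simp
  qed
  have cint: "(LINT t|T3. \<phi> t * f t) = C"
  proof -
    have m1: "(\<lambda>t. \<phi> t * f t) \<in> borel_measurable T3" by measurable
    have m2: "(\<lambda>t. \<phi> t * f0 t) \<in> borel_measurable T3" by measurable
    have ae: "AE t in T3. \<phi> t * f t = \<phi> t * f0 t" using fe' by (rule AE_mp) auto
    have "(LINT t|T3. \<phi> t * f t) = (LINT t|T3. \<phi> t * f0 t)" by (rule integral_cong_AE[OF m1 m2 ae])
    also have "\<dots> = (LINT t|T3. (C * (1 / II)) * ((\<phi> t)\<^sup>2 / (MM - W t)))"
      unfolding f0_def by (rule Bochner_Integration.integral_cong) (auto simp: power2_eq_square)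
    also have "\<dots> = (C * (1 / II)) * (LINT t|T3. (\<phi> t)\<^sup>2 / (MM - W t))" by (rule integral_mult_right_zero)
    also have "\<dots> = C * (1 / II) * II" by (simp only: II_def)
    also have "\<dots> = C" using I0 by simp
    finally show ?thesis .
  qed
  have "AE q in T3. (W q - MM) * f q + \<mu> * \<phi> q * (LINT t|T3. \<phi> t * f t) = 0"
    using AE_T3_Tbox AE_T3_ne[of qs] fe'
  proof (eventually_elim)
    case (elim q)
    then have d: "MM - W q \<noteq> 0" using MW_pos by force
    show ?case unfolding cint elim(3) f0_def mu using d I0 by (simp add: field_simps)
  qed
  then show ?thesis unfolding RS_def using fi nsq by blast
qed

end

theorem lemma2p4:
  fixes \<phi> :: "real^3 \<Rightarrow> real" and w :: "real^3 \<Rightarrow> real^3 \<Rightarrow> real"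
    and p0 q0 p :: "real^3" and \<delta> \<mu> :: real and q0f :: "real^3 \<Rightarrow> real^3"
  assumes phi_per: "periodic3 \<phi>" and phi_an: "real_analytic_on UNIV \<phi>"
    and phi_nz: "\<exists>x. \<phi> x \<noteq> 0"
    and w_per1: "\<And>q. periodic3 (\<lambda>p. w p q)" and w_per2: "\<And>p. periodic3 (w p)"
    and w_an: "real_analytic_on UNIV (\<lambda>z. w (fst z) (snd z))"
    and w_max: "\<And>p q. w p q \<le> w p0 q0"
    and w_max_unique: "\<And>p q. w p q = w p0 q0 \<Longrightarrow> in_lattice (p - p0) \<and> in_lattice (q - q0)"
    and w_nondeg: "neg_def_hessian (\<lambda>z. w (fst z) (snd z)) (p0, q0)"
    and delta_pos: "\<delta> > 0"
    and q0f_an: "\<And>i. real_analytic_on (ball p0 \<delta>) (\<lambda>p. q0f p $ i)"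
    and q0f_max: "\<And>p q. p \<in> ball p0 \<delta> \<Longrightarrow> w p q \<le> w p (q0f p)"
    and q0f_unique: "\<And>p q. p \<in> ball p0 \<delta> \<Longrightarrow> w p q = w p (q0f p) \<Longrightarrow> in_lattice (q - q0f p)"
    and q0f_nondeg: "\<And>p. p \<in> ball p0 \<delta> \<Longrightarrow> neg_def_hessian (w p) (q0f p)"
    and p_in: "p \<in> ball p0 \<delta>" and mu_pos: "\<mu> > 0"
  shows "(is_resonance w \<phi> \<mu> p \<longleftrightarrow> \<phi> (q0f p) \<noteq> 0 \<and> Delta w \<phi> \<mu> p = 0)
       \<and> (\<phi> (q0f p) \<noteq> 0 \<and> Delta w \<phi> \<mu> p = 0 \<longleftrightarrow> \<phi> (q0f p) \<noteq> 0 \<and> \<mu> = mu_p w \<phi> p)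
       \<and> (is_resonance w \<phi> \<mu> p \<longrightarrow>
            (\<forall>f. resonance_state w \<phi> \<mu> p f \<longleftrightarrow>
               (\<exists>C. C \<noteq> 0 \<and> (AE q in T3. f q = C * mu_p w \<phi> p * \<phi> q / (Mth w p - w p q)))))"
proof -
  have Wc: "continuous_on UNIV (w p)"
  proof -
    have "continuous_on UNIV (\<lambda>z::(real^3) \<times> (real^3). w (fst z) (snd z))"
      by (rule analytic_cont[OF w_an])
    then have "continuous_on UNIV (\<lambda>q. (\<lambda>z::(real^3) \<times> (real^3). w (fst z) (snd z)) (p, q))"
      by (rule continuous_on_compose2) (auto intro!: continuous_intros)
    then show ?thesis by simp
  qed
  interpret S: Sett \<phi> "w p" "q0f p" \<mu>
  proof
    show "periodic3 \<phi>" by (fact phi_per)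
    show "real_analytic_on UNIV \<phi>" by (fact phi_an)
    show "periodic3 (w p)" by (fact w_per2)
    show "continuous_on UNIV (w p)" by (fact Wc)
    show "\<And>q. w p q \<le> w p (q0f p)" using q0f_max[OF p_in] .
    show "\<And>q. w p q = w p (q0f p) \<Longrightarrow> in_lattice (q - q0f p)" using q0f_unique[OF p_in] .
    show "neg_def_hessian (w p) (q0f p)" using q0f_nondeg[OF p_in] .
    show "\<mu> > 0" by (fact mu_pos)
  qed
  have eqM: "Mth w p = S.MM" unfolding Mth_def S.MM_def ..
  have rs: "resonance_state w \<phi> \<mu> p f \<longleftrightarrow> S.RS f" for f
    unfolding resonance_state_def S.RS_def eqM ..
  have Dl: "Delta w \<phi> \<mu> p = 1 - \<mu> * S.II" unfolding Delta_def S.II_def eqM ..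
  have mp: "mu_p w \<phi> p = 1 / S.II" unfolding mu_p_def S.II_def eqM ..
  have pq: "\<phi> (q0f p) = \<phi> S.qs" using S.phi_qs by simp
  have A: "is_resonance w \<phi> \<mu> p \<longleftrightarrow> \<phi> (q0f p) \<noteq> 0 \<and> Delta w \<phi> \<mu> p = 0"
  proof
    assume "is_resonance w \<phi> \<mu> p"
    then obtain f where "S.RS f" unfolding is_resonance_def rs by blast
    from S.R1[OF this] show "\<phi> (q0f p) \<noteq> 0 \<and> Delta w \<phi> \<mu> p = 0" unfolding pq Dl by simp
  next
    assume a: "\<phi> (q0f p) \<noteq> 0 \<and> Delta w \<phi> \<mu> p = 0"
    then have p0: "\<phi> S.qs \<noteq> 0" and mI: "\<mu> * S.II = 1" unfolding pq Dl by auto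
    have "S.RS (\<lambda>q. 1 * (1 / S.II) * \<phi> q / (S.MM - w p q))"
      by (rule S.R2[OF p0 mI, of 1]) auto
    then show "is_resonance w \<phi> \<mu> p" unfolding is_resonance_def rs by blast
  qed
  have B: "\<phi> (q0f p) \<noteq> 0 \<and> Delta w \<phi> \<mu> p = 0 \<longleftrightarrow> \<phi> (q0f p) \<noteq> 0 \<and> \<mu> = mu_p w \<phi> p"
  proof -
    have "Delta w \<phi> \<mu> p = 0 \<longleftrightarrow> \<mu> = mu_p w \<phi> p"
    proof
      assume "Delta w \<phi> \<mu> p = 0"
      then have "\<mu> * S.II = 1" unfolding Dl by simp
      then show "\<mu> = mu_p w \<phi> p" unfolding mp by (metis nonzero_eq_divide_eq mult_zero_right zero_neq_one)
    next
      assume "\<mu> = mu_p w \<phi> p"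
      then have "\<mu> = 1 / S.II" unfolding mp .
      moreover have "S.II \<noteq> 0" using \<open>\<mu> = 1 / S.II\<close> mu_pos by auto
      ultimately show "Delta w \<phi> \<mu> p = 0" unfolding Dl by simp
    qed
    then show ?thesis by blast
  qed
  have C: "is_resonance w \<phi> \<mu> p \<longrightarrow>
            (\<forall>f. resonance_state w \<phi> \<mu> p f \<longleftrightarrow>
               (\<exists>C. C \<noteq> 0 \<and> (AE q in T3. f q = C * mu_p w \<phi> p * \<phi> q / (Mth w p - w p q))))"
  proof (intro impI allI)
    fix f assume "is_resonance w \<phi> \<mu> p"
    then have p0: "\<phi> S.qs \<noteq> 0" and mI: "\<mu> * S.II = 1" using A unfolding pq Dl by auto
    have muI: "\<mu> = 1 / S.II" using mI by (metis nonzero_eq_divide_eq mult_zero_right zero_neq_one)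
    show "resonance_state w \<phi> \<mu> p f \<longleftrightarrow>
               (\<exists>C. C \<noteq> 0 \<and> (AE q in T3. f q = C * mu_p w \<phi> p * \<phi> q / (Mth w p - w p q)))"
    proof
      assume "resonance_state w \<phi> \<mu> p f"
      then obtain c where c: "c \<noteq> 0" "AE q in T3. f q = \<mu> * c * \<phi> q / (S.MM - w p q)"
        using S.R1 unfolding rs by blast
      have "AE q in T3. f q = c * mu_p w \<phi> p * \<phi> q / (Mth w p - w p q)"
        using c(2) by (rule AE_mp) (auto simp: eqM mp muI[symmetric] mult.commute)
      then show "\<exists>C. C \<noteq> 0 \<and> (AE q in T3. f q = C * mu_p w \<phi> p * \<phi> q / (Mth w p - w p q))"
        using c(1) by blast
    next
      assume "\<exists>C. C \<noteq> 0 \<and> (AE q in T3. f q = C * mu_p w \<phi> p * \<phi> q / (Mth w p - w p q))"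
      then obtain C where C: "C \<noteq> 0" "AE q in T3. f q = C * (1 / S.II) * \<phi> q / (S.MM - w p q)"
        unfolding mp eqM by blast
      show "resonance_state w \<phi> \<mu> p f" unfolding rs by (rule S.R2[OF p0 mI C])
    qed
  qed
  show ?thesis using A B C by blast
qed

end
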